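(* Let $|\cdot|$ be a norm on $\mathbb{R}^d$ and let $\mathbf{X}=\{\mathbf{X}_j,j\in\mathbb{Z}\}$ be a strictly stationary, regularly varying $\mathbb{R}^d$-valued time series with tail process $\mathbf{Y}$. Let $u_n>0$ and positive integers $r_n$ satisfy $u_n\to\infty$, $r_n\to\infty$, $nw_n\to\infty$, $r_n/n\to0$, $r_nw_n\to0$, where $w_n=\mathbb{P}(|\mathbf{X}_0|>u_n)$. Assume condition $\mathcal{S}^{(0)}(r_n,u_n)$ holds. Let $\gamma_1,\gamma_2\ge0$ and let $f:\mathbb{R}_+^2\to\mathbb{R}_+$ be $(\gamma_1,\gamma_2)$-homogeneous, i.e. $f(as,bt)=a^{\gamma_1}b^{\gamma_2}f(s,t)$ for all $a,b,s,t>0$. Then $$\lim_{n\to\infty}\frac{1}{r_n^{\gamma_1+\gamma_2+1}w_n}\mathbb{E}[f(t(1),t(N_1))\mathbf{1}_{A_1}]=\frac{f(1,1)}{\gamma_1+\gamma_2+1}\vartheta.$$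
   Context: Tail process: for all $i\le j$ the law of $x^{-1}(\mathbf{X}_i,\dots,\mathbf{X}_j)$ given $|\mathbf{X}_0|>x$ converges weakly to that of $(\mathbf{Y}_i,\dots,\mathbf{Y}_j)$ as $x\to\infty$. Notation: $\mathbf{x}^*_{i,j}=\sup_{i\le l\le j}|\mathbf{x}_l|$. Condition $\mathcal{S}^{(\gamma)}(r_n,u_n)$ ($\gamma\ge0$): for all $s,t>0$, $\lim_{\ell\to\infty}\limsup_{n\to\infty}\frac{1}{w_n}\sum_{i=\ell}^{r_n}i^\gamma\,\mathbb{P}(|\mathbf{X}_0|>u_ns,|\mathbf{X}_i|>u_nt)=0$. $\vartheta=\mathbb{P}(\mathbf{Y}^*_{-\infty,-1}\le1)$. $A_1=\{\mathbf{X}^*_{1,r_n}>u_n\}$; on $A_1$, $t(1)$ and $t(N_1)$ are the smallest and largest $i\in\{1,\dots,r_n\}$ with $|\mathbf{X}_i|>u_n$. *)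

theory Defs
  imports "HOL-Probability.Probability"
begin

definition is_norm :: "('x::real_vector \<Rightarrow> real) \<Rightarrow> bool" where
  "is_norm N \<longleftrightarrow> (\<forall>x. N x \<ge> 0) \<and> (\<forall>x. N x = 0 \<longleftrightarrow> x = 0) \<and>
     (\<forall>c x. N (c *\<^sub>R x) = \<bar>c\<bar> * N x) \<and> (\<forall>x y. N (x + y) \<le> N x + N y)"

definition strictly_stationary :: "'w measure \<Rightarrow> (int \<Rightarrow> 'w \<Rightarrow> 'x::topological_space) \<Rightarrow> bool" where
  "strictly_stationary M X \<longleftrightarrow>
     distr M (PiM UNIV (\<lambda>_::int. borel)) (\<lambda>\<omega> k. X (k + 1) \<omega>) =
     distr M (PiM UNIV (\<lambda>_::int. borel)) (\<lambda>\<omega> k. X k \<omega>)"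

definition rv_marginal :: "'w measure \<Rightarrow> (int \<Rightarrow> 'w \<Rightarrow> 'x) \<Rightarrow> ('x \<Rightarrow> real) \<Rightarrow> bool" where
  "rv_marginal M X N \<longleftrightarrow> (\<exists>\<alpha>>0.
     (\<forall>\<^sub>F x in at_top. measure M {\<omega>\<in>space M. N (X 0 \<omega>) > x} > 0) \<and>
     (\<forall>t>0. ((\<lambda>x. measure M {\<omega>\<in>space M. N (X 0 \<omega>) > t * x} /
                   measure M {\<omega>\<in>space M. N (X 0 \<omega>) > x}) \<longlongrightarrow> t powr (-\<alpha>)) at_top))"

(* Y (on the probability space MY) is the tail process of X: for all i \<le> j the law of
   x^{-1}(X_i,...,X_j) given N(X_0) > x converges weakly to the law of (Y_i,...,Y_j),
   i.e. E[g(x^{-1} X) | N(X_0) > x] \<rightarrow> E[g(Y)] for every bounded continuous g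
   depending only on the coordinates i..j. *)
definition tail_process ::
  "'w measure \<Rightarrow> (int \<Rightarrow> 'w \<Rightarrow> 'x::real_normed_vector) \<Rightarrow> ('x \<Rightarrow> real) \<Rightarrow>
   'v measure \<Rightarrow> (int \<Rightarrow> 'v \<Rightarrow> 'x) \<Rightarrow> bool" where
  "tail_process M X N MY Y \<longleftrightarrow>
    (\<forall>(i::int) j (g :: (int \<Rightarrow> 'x) \<Rightarrow> real). i \<le> j \<longrightarrow> bounded (range g) \<longrightarrow> continuous_on UNIV g \<longrightarrow>
       g \<in> borel_measurable (PiM UNIV (\<lambda>_. borel)) \<longrightarrow>
       (\<forall>z. g z = g (\<lambda>k. if k \<in> {i..j} then z k else 0)) \<longrightarrow>
       ((\<lambda>x. (\<integral>\<omega>. g (\<lambda>k. X k \<omega> /\<^sub>R x) * indicator {\<omega>\<in>space M. N (X 0 \<omega>) > x} \<omega> \<partial>M)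
               / measure M {\<omega>\<in>space M. N (X 0 \<omega>) > x})
         \<longlongrightarrow> (\<integral>v. g (\<lambda>k. Y k v) \<partial>MY)) at_top)"

definition wn :: "'w measure \<Rightarrow> (int \<Rightarrow> 'w \<Rightarrow> 'x) \<Rightarrow> ('x \<Rightarrow> real) \<Rightarrow> (nat \<Rightarrow> real) \<Rightarrow> nat \<Rightarrow> real" where
  "wn M X N u n = measure M {\<omega>\<in>space M. N (X 0 \<omega>) > u n}"

(* Condition S^(gamma)(r_n,u_n). (The factor i^gamma is written i powr gamma; it only
   differs from the intended value at i = 0, which is irrelevant for l \<rightarrow> \<infinity>.) *)
definition cond_S :: "real \<Rightarrow> 'w measure \<Rightarrow> (int \<Rightarrow> 'w \<Rightarrow> 'x) \<Rightarrow> ('x \<Rightarrow> real) \<Rightarrow>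
    (nat \<Rightarrow> nat) \<Rightarrow> (nat \<Rightarrow> real) \<Rightarrow> bool" where
  "cond_S \<gamma> M X N r u \<longleftrightarrow> (\<forall>s>0. \<forall>t>0.
     ((\<lambda>l. limsup (\<lambda>n. ereal (1 / wn M X N u n *
         (\<Sum>i=l..r n. real i powr \<gamma> *
            measure M {\<omega>\<in>space M. N (X 0 \<omega>) > u n * s \<and> N (X (int i) \<omega>) > u n * t}))))
      \<longlongrightarrow> 0) sequentially)"

definition theta :: "'v measure \<Rightarrow> (int \<Rightarrow> 'v \<Rightarrow> 'x) \<Rightarrow> ('x \<Rightarrow> real) \<Rightarrow> real" where
  "theta MY Y N = measure MY {v\<in>space MY. \<forall>k<0. N (Y k v) \<le> 1}"

definition exc_times :: "(int \<Rightarrow> 'w \<Rightarrow> 'x) \<Rightarrow> ('x \<Rightarrow> real) \<Rightarrow> nat \<Rightarrow> real \<Rightarrow> 'w \<Rightarrow> nat set" where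
  "exc_times X N r x \<omega> = {i\<in>{1..r}. N (X (int i) \<omega>) > x}"

definition A1 :: "'w measure \<Rightarrow> (int \<Rightarrow> 'w \<Rightarrow> 'x) \<Rightarrow> ('x \<Rightarrow> real) \<Rightarrow> nat \<Rightarrow> real \<Rightarrow> 'w set" where
  "A1 M X N r x = {\<omega>\<in>space M. exc_times X N r x \<omega> \<noteq> {}}"

(* t(1) and t(N_1): first and last exceedance times (meaningful on A_1) *)
definition t_first :: "(int \<Rightarrow> 'w \<Rightarrow> 'x) \<Rightarrow> ('x \<Rightarrow> real) \<Rightarrow> nat \<Rightarrow> real \<Rightarrow> 'w \<Rightarrow> nat" where
  "t_first X N r x \<omega> = Min (exc_times X N r x \<omega>)"

definition t_last :: "(int \<Rightarrow> 'w \<Rightarrow> 'x) \<Rightarrow> ('x \<Rightarrow> real) \<Rightarrow> nat \<Rightarrow> real \<Rightarrow> 'w \<Rightarrow> nat" where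
  "t_last X N r x \<omega> = Max (exc_times X N r x \<omega>)"

end

theory Submission
  imports Defs
begin


lemma mvt_powr:
  fixes a b p :: real
  assumes "0 < a" "a \<le> b" "p \<ge> 1"
  shows "p * a powr (p-1) * (b - a) \<le> b powr p - a powr p \<and> b powr p - a powr p \<le> p * b powr (p-1) * (b - a)"
proof (cases "a = b")
  case True thus ?thesis by simp
next
  case False
  hence ab: "a < b" using assms by simp
  have "\<exists>z>a. z < b \<and> b powr p - a powr p = (b - a) * (p * z powr (p - 1))"
    using assms ab by (intro MVT2) (auto intro!: has_real_derivative_powr)
  then obtain z where z: "z > a" "z < b" "b powr p - a powr p = (b - a) * (p * z powr (p - 1))" by blast
  have "a powr (p-1) \<le> z powr (p-1)" using z assms by (intro powr_mono2) auto
  hence 1: "p * a powr (p-1) * (b - a) \<le> p * z powr (p-1) * (b - a)"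
    using assms ab by (intro mult_right_mono mult_left_mono) auto
  have "z powr (p-1) \<le> b powr (p-1)" using z assms by (intro powr_mono2) auto
  hence 2: "p * z powr (p-1) * (b - a) \<le> p * b powr (p-1) * (b - a)"
    using assms ab by (intro mult_right_mono mult_left_mono) auto
  show ?thesis using 1 2 z(3) by (simp add: mult.commute mult.left_commute)
qed

lemma div_step:
  fixes x y c g :: real assumes "g \<ge> 0" "x - y \<le> (g+1) * c"
  shows "x / (g+1) \<le> y / (g+1) + c"
proof -
  have "(x - y) / (g+1) \<le> c" using assms by (simp add: pos_divide_le_eq mult.commute)
  thus ?thesis by (simp add: diff_divide_distrib)
qed

lemma div_step2:
  fixes x y c g :: real assumes "g \<ge> 0" "(g+1) * c \<le> x - y"
  shows "y / (g+1) + c \<le> x / (g+1)"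
proof -
  have "c \<le> (x - y) / (g+1)" using assms by (simp add: pos_le_divide_eq mult.commute)
  thus ?thesis by (simp add: diff_divide_distrib)
qed

lemma sum_powr_lower:
  fixes g :: real assumes g: "g \<ge> 0"
  shows "real n powr (g+1) / (g+1) \<le> (\<Sum>i=1..n. real i powr g)"
proof (induction n)
  case 0 then show ?case by simp
next
  case (Suc n)
  have step: "real (Suc n) powr (g+1) - real n powr (g+1) \<le> (g+1) * real (Suc n) powr g"
  proof (cases "n = 0")
    case True then show ?thesis using g by simp
  next
    case False
    then show ?thesis using mvt_powr[of "real n" "real (Suc n)" "g+1"] g by simp
  qed
  have "real (Suc n) powr (g+1) / (g+1) \<le> real n powr (g+1) / (g+1) + real (Suc n) powr g"
    using div_step[OF g step] .
  also have "\<dots> \<le> (\<Sum>i=1..n. real i powr g) + real (Suc n) powr g" using Suc by simp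
  finally show ?case by simp
qed

lemma sum_powr_upper:
  fixes g :: real assumes g: "g \<ge> 0"
  shows "(\<Sum>i=1..n. real i powr g) \<le> real (n+1) powr (g+1) / (g+1)"
proof (induction n)
  case 0 then show ?case using g by simp
next
  case (Suc n)
  have step: "(g+1) * real (Suc n) powr g \<le> real (Suc n + 1) powr (g+1) - real (Suc n) powr (g+1)"
    proof -
    have "1 \<le> g + 1" using g by simp
    from mvt_powr[OF _ _ this, of "real (Suc n)" "real (Suc n + 1)"] show ?thesis by simp
  qed
  have "(\<Sum>i=1..Suc n. real i powr g) = (\<Sum>i=1..n. real i powr g) + real (Suc n) powr g" by simp
  also have "\<dots> \<le> real (n+1) powr (g+1) / (g+1) + real (Suc n) powr g" using Suc by simp
  also have "\<dots> \<le> real (Suc n + 1) powr (g+1) / (g+1)"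
    using div_step2[OF g step] by simp
  finally show ?case by simp
qed




lemma norm_cont:
  fixes N :: "real ^ 'd \<Rightarrow> real"
  assumes "is_norm N" shows "continuous_on UNIV N"
proof (rule convex_on_continuous)
  show "convex_on UNIV N"
  proof (rule convex_onI)
    fix t :: real and x y :: "real ^ 'd"
    assume t: "t > 0" "t < 1"
    have "N ((1 - t) *\<^sub>R x + t *\<^sub>R y) \<le> N ((1 - t) *\<^sub>R x) + N (t *\<^sub>R y)"
      using assms unfolding is_norm_def by blast
    also have "\<dots> = (1 - t) * N x + t * N y"
      using assms t unfolding is_norm_def by simp
    finally show "N ((1 - t) *\<^sub>R x + t *\<^sub>R y) \<le> (1 - t) * N x + t * N y" .
  qed simp
qed simp

lemma norm_scale:
  fixes N :: "real ^ 'd \<Rightarrow> real"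
  assumes "is_norm N" "v > 0" shows "N (x /\<^sub>R v) = N x / v"
  using assms unfolding is_norm_def by (simp add: divide_inverse mult.commute)

definition tent :: "real \<Rightarrow> real \<Rightarrow> real \<Rightarrow> real" where
  "tent c e t = max 0 (1 - \<bar>t - c\<bar> / e)"

lemma tent_cont: "continuous_on UNIV (tent c e)"
  unfolding tent_def divide_inverse by (intro continuous_intros)

lemma tent_bd: "e > 0 \<Longrightarrow> 0 \<le> tent c e t \<and> tent c e t \<le> 1"
  unfolding tent_def by auto

lemma tent_pos: assumes "tent c e t > 0" "e > 0" shows "\<bar>t - c\<bar> < e"
proof -
  have "\<bar>t - c\<bar> / e < 1" using assms(1) unfolding tent_def less_max_iff_disj by linarith
  thus ?thesis using assms(2) by (simp add: divide_less_eq_1_pos)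
qed

lemma tent_sum_le1:
  assumes K: "K > (0::nat)"
  shows "(\<Sum>i<K. tent (1 + real i / K) (1 / (2 * real K)) t) \<le> 1"
proof (cases "\<exists>i<K. tent (1 + real i / K) (1 / (2 * real K)) t > 0")
  case False
  have e: "1 / (2 * real K) > 0" using K by simp
  have "\<forall>i<K. tent (1 + real i / K) (1 / (2 * real K)) t = 0"
  proof (intro allI impI)
    fix i assume "i < K"
    hence "\<not> 0 < tent (1 + real i / K) (1 / (2 * real K)) t" using False by blast
    moreover have "0 \<le> tent (1 + real i / K) (1 / (2 * real K)) t" using tent_bd e by blast
    ultimately show "tent (1 + real i / K) (1 / (2 * real K)) t = 0" by linarith
  qed
  then show ?thesis by simp
next
  case True
  then obtain i where i: "i < K" "tent (1 + real i / K) (1 / (2 * real K)) t > 0" by blast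
  have e: "1 / (2 * real K) > 0" using K by simp
  have ti: "\<bar>t - (1 + real i / K)\<bar> < 1 / (2 * real K)" using tent_pos[OF i(2) e] .
  have z: "tent (1 + real i' / K) (1 / (2 * real K)) t = 0" if "i' \<in> {..<K} - {i}" for i'
  proof (rule ccontr)
    assume "tent (1 + real i' / K) (1 / (2 * real K)) t \<noteq> 0"
    hence "tent (1 + real i' / K) (1 / (2 * real K)) t > 0" using tent_bd[OF e] by (simp add: less_le)
    hence ti': "\<bar>t - (1 + real i' / K)\<bar> < 1 / (2 * real K)" using tent_pos e by blast
    have "\<bar>real i / K - real i' / K\<bar> < 1 / K" using ti ti' by (simp add: abs_if split: if_splits)
    hence "\<bar>real i - real i'\<bar> < 1" using K by (simp add: diff_divide_distrib[symmetric] abs_divide divide_less_cancel)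
    hence "i = i'" by linarith
    thus False using that by simp
  qed
  have "(\<Sum>i<K. tent (1 + real i / K) (1 / (2 * real K)) t) =
        tent (1 + real i / K) (1 / (2 * real K)) t + (\<Sum>i'\<in>{..<K} - {i}. tent (1 + real i' / K) (1 / (2 * real K)) t)"
    using i(1) by (subst sum.remove[of _ i]) auto
  also have "\<dots> = tent (1 + real i / K) (1 / (2 * real K)) t" using z by simp
  also have "\<dots> \<le> 1" using tent_bd[OF e] by blast
  finally show ?thesis .
qed


lemma prod_diff_le:
  fixes a b :: "'i \<Rightarrow> real"
  assumes "finite K" "\<And>k. k \<in> K \<Longrightarrow> 0 \<le> b k \<and> b k \<le> a k \<and> a k \<le> 1"
  shows "(\<Prod>k\<in>K. a k) - (\<Prod>k\<in>K. b k) \<le> (\<Sum>k\<in>K. a k - b k)"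
  using assms
proof (induction K rule: finite_induct)
  case empty then show ?case by simp
next
  case (insert k F)
  have IH: "(\<Prod>k\<in>F. a k) - (\<Prod>k\<in>F. b k) \<le> (\<Sum>k\<in>F. a k - b k)" using insert by auto
  have ab: "0 \<le> b k" "b k \<le> a k" "a k \<le> 1" using insert by auto
  have bF: "\<And>k. k \<in> F \<Longrightarrow> 0 \<le> b k \<and> b k \<le> 1" using insert(4) by force
  have pb: "0 \<le> (\<Prod>k\<in>F. b k)" "(\<Prod>k\<in>F. b k) \<le> 1" using bF by (auto intro!: prod_nonneg prod_le_1)
  have pab: "(\<Prod>k\<in>F. b k) \<le> (\<Prod>k\<in>F. a k)" using insert by (auto intro!: prod_mono)
  have "(\<Prod>k\<in>insert k F. a k) - (\<Prod>k\<in>insert k F. b k) =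
        a k * ((\<Prod>k\<in>F. a k) - (\<Prod>k\<in>F. b k)) + (a k - b k) * (\<Prod>k\<in>F. b k)"
    using insert by (simp add: algebra_simps)
  also have "\<dots> \<le> 1 * ((\<Prod>k\<in>F. a k) - (\<Prod>k\<in>F. b k)) + (a k - b k) * 1"
    using ab pb pab by (intro add_mono mult_mono) auto
  also have "\<dots> \<le> (\<Sum>k\<in>F. a k - b k) + (a k - b k)" using IH by simp
  finally show ?case using insert by simp
qed

definition phip :: "real \<Rightarrow> real \<Rightarrow> real" where "phip e t = min 1 (max 0 ((1 + e - t) / e))"
definition phim :: "real \<Rightarrow> real \<Rightarrow> real" where "phim e t = min 1 (max 0 ((1 - t) / e))"

lemma phip_cont: "continuous_on UNIV (phip e)" unfolding phip_def divide_inverse by (intro continuous_intros)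
lemma phim_cont: "continuous_on UNIV (phim e)" unfolding phim_def divide_inverse by (intro continuous_intros)
lemma phip_bd: "0 \<le> phip e t \<and> phip e t \<le> 1" unfolding phip_def by auto
lemma phim_bd: "0 \<le> phim e t \<and> phim e t \<le> 1" unfolding phim_def by auto
lemma phip_ge: "e > 0 \<Longrightarrow> t \<le> 1 \<Longrightarrow> phip e t = 1" unfolding phip_def by (auto simp: field_simps)
lemma phim_le: "e > 0 \<Longrightarrow> t > 1 \<Longrightarrow> phim e t = 0" unfolding phim_def by (auto simp: field_simps)
lemma phim_le_phip: assumes "e > 0" shows "phim e t \<le> phip e t"
proof -
  have "(1 - t) / e \<le> (1 + e - t) / e" using assms by (intro divide_right_mono) auto
  thus ?thesis unfolding phim_def phip_def by (intro min.mono max.mono) auto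
qed
lemma phi_gap: assumes e: "e > 0" shows "phip e t - phim e t \<le> 2 * tent 1 (2 * e) t"
proof (cases "t \<le> 1 - e")
  case True
  hence "phim e t = 1" "phip e t = 1" using e unfolding phim_def phip_def by (auto simp: field_simps)
  then show ?thesis using tent_bd[of "2*e" 1 t] e by simp
next
  case False
  show ?thesis
  proof (cases "t \<ge> 1 + e")
    case True
    hence "phim e t = 0" "phip e t = 0" using e unfolding phim_def phip_def by (auto simp: field_simps)
    then show ?thesis using tent_bd[of "2*e" 1 t] e by simp
  next
    case F2: False
    have "\<bar>t - 1\<bar> \<le> e" using False F2 by auto
    hence "\<bar>t - 1\<bar> / (2 * e) \<le> 1/2" using e by (simp add: field_simps)
    hence "tent 1 (2 * e) t \<ge> 1/2" unfolding tent_def by simp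
    then show ?thesis using phip_bd[of e t] phim_bd[of e t] by simp
  qed
qed


locale tset =
  fixes M :: "'w measure" and X :: "int \<Rightarrow> 'w \<Rightarrow> real ^ 'd"
    and MY :: "'v measure" and Y :: "int \<Rightarrow> 'v \<Rightarrow> real ^ 'd"
    and N :: "real ^ 'd \<Rightarrow> real" and \<alpha> :: real
  assumes norm: "is_norm N"
    and probM: "prob_space M" and probMY: "prob_space MY"
    and measX: "\<And>k. X k \<in> borel_measurable M"
    and measY: "\<And>k. Y k \<in> borel_measurable MY"
    and alpha: "\<alpha> > 0"
    and ratio: "\<And>t. t > 0 \<Longrightarrow> ((\<lambda>x. measure M {\<omega>\<in>space M. N (X 0 \<omega>) > t * x} /
                   measure M {\<omega>\<in>space M. N (X 0 \<omega>) > x}) \<longlongrightarrow> t powr (-\<alpha>)) at_top"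
    and tpos: "\<forall>\<^sub>F x in at_top. measure M {\<omega>\<in>space M. N (X 0 \<omega>) > x} > 0"
    and tail: "tail_process M X N MY Y"
    and stat: "strictly_stationary M X"
begin

sublocale PM: prob_space M by (rule probM)
sublocale PY: prob_space MY by (rule probMY)

lemma Ncont: "continuous_on UNIV N" by (rule norm_cont[OF norm])
lemma Nmeas[measurable]: "N \<in> borel_measurable borel"
  using Ncont by (simp add: borel_measurable_continuous_onI)
lemma Xmeas[measurable]: "X k \<in> borel_measurable M" by (rule measX)
lemma Ymeas[measurable]: "Y k \<in> borel_measurable MY" by (rule measY)
lemma Nnonneg: "N x \<ge> 0" using norm unfolding is_norm_def by blast

lemma tail_prod:
  fixes \<phi> :: "real \<Rightarrow> real" and K :: "int set"
  assumes phic: "continuous_on UNIV \<phi>" and phib: "\<And>t. 0 \<le> \<phi> t \<and> \<phi> t \<le> 1"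
    and K: "K \<subseteq> {i..j}" "i \<le> j"
  shows "((\<lambda>v. (\<integral>\<omega>. (\<Prod>k\<in>K. \<phi> (N (X k \<omega> /\<^sub>R v))) * indicator {\<omega>\<in>space M. N (X 0 \<omega>) > v} \<omega> \<partial>M)
               / measure M {\<omega>\<in>space M. N (X 0 \<omega>) > v})
         \<longlongrightarrow> (\<integral>y. (\<Prod>k\<in>K. \<phi> (N (Y k y))) \<partial>MY)) at_top"
proof -
  define g where "g = (\<lambda>z::int \<Rightarrow> real ^ 'd. \<Prod>k\<in>K. \<phi> (N (z k)))"
  have fin: "finite K" using K finite_subset by blast
  have rg: "range g \<subseteq> {0..1}" unfolding g_def using phib
    by (auto intro!: prod_nonneg prod_le_1)
  have bd: "bounded (range g)" using rg bounded_subset[OF bounded_closed_interval] by blast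
  have phim[measurable]: "\<phi> \<in> borel_measurable borel" using phic by (simp add: borel_measurable_continuous_onI)
  have cg: "continuous_on UNIV g" unfolding g_def
    by (intro continuous_intros continuous_on_compose2[OF phic] continuous_on_compose2[OF Ncont]) auto
  have mg: "g \<in> borel_measurable (PiM UNIV (\<lambda>_. borel))" unfolding g_def
    by measurable
  have rs: "\<forall>z. g z = g (\<lambda>k. if k \<in> {i..j} then z k else 0)" unfolding g_def
    using K by (auto intro!: prod.cong)
  show ?thesis using tail K(2) bd cg mg rs unfolding tail_process_def g_def by blast
qed

lemma int_bd:
  fixes f :: "'w \<Rightarrow> real"
  assumes "f \<in> borel_measurable M" "\<And>\<omega>. \<omega> \<in> space M \<Longrightarrow> \<bar>f \<omega>\<bar> \<le> B"
  shows "integrable M f"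
  using assms by (intro PM.integrable_const_bound[where B=B]) auto

lemma scale_ineq:
  fixes \<phi> :: "real \<Rightarrow> real"
  assumes phic: "continuous_on UNIV \<phi>" and phib: "\<And>t. 0 \<le> \<phi> t \<and> \<phi> t \<le> 1"
    and x: "x \<ge> 1"
  shows "x powr (-\<alpha>) * (\<integral>y. \<phi> (x * N (Y j y)) \<partial>MY) \<le> (\<integral>y. \<phi> (N (Y j y)) \<partial>MY)"
proof -
  have phim[measurable]: "\<phi> \<in> borel_measurable borel" using phic by (simp add: borel_measurable_continuous_onI)
  define \<psi> where "\<psi> = (\<lambda>t. \<phi> (x * t))"
  have psic: "continuous_on UNIV \<psi>" unfolding \<psi>_def
    by (intro continuous_on_compose2[OF phic] continuous_intros) auto
  have psib: "\<And>t. 0 \<le> \<psi> t \<and> \<psi> t \<le> 1" unfolding \<psi>_def using phib by auto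
  have psim[measurable]: "\<psi> \<in> borel_measurable borel" using psic by (simp add: borel_measurable_continuous_onI)
  define D where "D = (\<lambda>v. measure M {\<omega>\<in>space M. N (X 0 \<omega>) > v})"
  define I where "I = (\<lambda>(h::real\<Rightarrow>real) v. \<integral>\<omega>. h (N (X j \<omega> /\<^sub>R v)) * indicator {\<omega>\<in>space M. N (X 0 \<omega>) > v} \<omega> \<partial>M)"
  have l1: "((\<lambda>v. I \<phi> v / D v) \<longlongrightarrow> (\<integral>y. \<phi> (N (Y j y)) \<partial>MY)) at_top"
    using tail_prod[OF phic phib, of "{j}" j j] unfolding I_def D_def by simp
  have l2: "((\<lambda>v. I \<psi> v / D v) \<longlongrightarrow> (\<integral>y. \<psi> (N (Y j y)) \<partial>MY)) at_top"
    using tail_prod[OF psic psib, of "{j}" j j] unfolding I_def D_def by simp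
  have xv: "filterlim (\<lambda>v. x * v) at_top at_top" using x
    by (intro filterlim_tendsto_pos_mult_at_top[OF tendsto_const]) (auto simp: filterlim_ident)
  have l3: "((\<lambda>v. I \<psi> (x * v) / D (x * v)) \<longlongrightarrow> (\<integral>y. \<psi> (N (Y j y)) \<partial>MY)) at_top"
    using filterlim_compose[OF l2 xv] by simp
  have l4: "((\<lambda>v. D (x * v) / D v) \<longlongrightarrow> x powr (-\<alpha>)) at_top"
    using ratio[of x] x unfolding D_def by simp
  have l5: "((\<lambda>v. I \<psi> (x * v) / D (x * v) * (D (x * v) / D v)) \<longlongrightarrow>
      (\<integral>y. \<psi> (N (Y j y)) \<partial>MY) * x powr (-\<alpha>)) at_top"
    by (rule tendsto_mult[OF l3 l4])
  have ev: "\<forall>\<^sub>F v in at_top. I \<psi> (x * v) / D (x * v) * (D (x * v) / D v) \<le> I \<phi> v / D v"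
    using tpos eventually_gt_at_top[of 0]
  proof eventually_elim
    case (elim v)
    have Dp: "D v > 0" using elim unfolding D_def by simp
    have eq: "I \<psi> (x * v) = (\<integral>\<omega>. \<phi> (N (X j \<omega> /\<^sub>R v)) * indicator {\<omega>\<in>space M. N (X 0 \<omega>) > x * v} \<omega> \<partial>M)"
      unfolding I_def \<psi>_def
    proof (intro Bochner_Integration.integral_cong refl)
      fix \<omega> have "x * N (X j \<omega> /\<^sub>R (x * v)) = N (X j \<omega> /\<^sub>R v)"
        using x elim norm_scale[OF norm, of "x * v"] norm_scale[OF norm, of v] by simp
      thus "\<phi> (x * N (X j \<omega> /\<^sub>R (x * v))) * indicator {\<omega> \<in> space M. x * v < N (X 0 \<omega>)} \<omega> =
         \<phi> (N (X j \<omega> /\<^sub>R v)) * indicator {\<omega> \<in> space M. x * v < N (X 0 \<omega>)} \<omega>" by simp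
    qed
    have i1: "integrable M (\<lambda>\<omega>. \<phi> (N (X j \<omega> /\<^sub>R v)) * indicator {\<omega> \<in> space M. x * v < N (X 0 \<omega>)} \<omega>)"
      using phib by (intro int_bd[where B=1]) (auto simp: indicator_def)
    have i2: "integrable M (\<lambda>\<omega>. \<phi> (N (X j \<omega> /\<^sub>R v)) * indicator {\<omega> \<in> space M. v < N (X 0 \<omega>)} \<omega>)"
      using phib by (intro int_bd[where B=1]) (auto simp: indicator_def)
    have pw: "\<phi> (N (X j \<omega> /\<^sub>R v)) * indicator {\<omega> \<in> space M. x * v < N (X 0 \<omega>)} \<omega>
         \<le> \<phi> (N (X j \<omega> /\<^sub>R v)) * indicator {\<omega> \<in> space M. v < N (X 0 \<omega>)} \<omega>" if "\<omega> \<in> space M" for \<omega>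
    proof -
      have "x * v < N (X 0 \<omega>) \<Longrightarrow> v < N (X 0 \<omega>)" using x elim
        by (smt (verit, best) mult_le_cancel_right1)
      thus ?thesis using phib[of "N (X j \<omega> /\<^sub>R v)"] that by (auto simp: indicator_def)
    qed
    have le: "I \<psi> (x * v) \<le> I \<phi> v" unfolding eq unfolding I_def
      by (rule integral_mono[OF i1 i2 pw])
    show ?case
    proof (cases "D (x * v) = 0")
      case True
      have "I \<phi> v \<ge> 0" unfolding I_def using phib by (intro Bochner_Integration.integral_nonneg) (auto simp: indicator_def)
      then show ?thesis using True Dp by simp
    next
      case False
      then show ?thesis using le Dp by (simp add: divide_right_mono)
    qed
  qed
  have "(\<integral>y. \<psi> (N (Y j y)) \<partial>MY) * x powr (-\<alpha>) \<le> (\<integral>y. \<phi> (N (Y j y)) \<partial>MY)"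
    by (rule tendsto_le[OF _ l1 l5 ev]) simp
  thus ?thesis unfolding \<psi>_def by (simp add: mult.commute)
qed


lemma atom_bound:
  assumes K: "K > (0::nat)"
  shows "(\<integral>y. tent 1 (1 / (4 * real K)) (N (Y j y)) \<partial>MY) \<le> 2 powr \<alpha> / K"
proof -
  define e where "e = 1 / (2 * real K)"
  have e: "e > 0" using K by (simp add: e_def)
  have tm[measurable]: "tent c e' \<in> borel_measurable borel" for c e'
    using tent_cont by (simp add: borel_measurable_continuous_onI)
  have intt: "integrable MY (\<lambda>y. tent c e' (N (Y j y)))" if "e' > 0" for c e'
    using tent_bd[OF that] by (intro PY.integrable_const_bound[where B=1]) auto
  define E1 where "E1 = (\<integral>y. tent 1 (1 / (4 * real K)) (N (Y j y)) \<partial>MY)"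
  have each: "2 powr (-\<alpha>) * E1 \<le> (\<integral>y. tent (1 + real i / K) e (N (Y j y)) \<partial>MY)" if "i < K" for i
  proof -
    define x where "x = 1 + real i / K"
    have x1: "x \<ge> 1" and x2: "x \<le> 2" using that K by (auto simp: x_def field_simps)
    have "E1 \<le> (\<integral>y. tent x e (x * N (Y j y)) \<partial>MY)" unfolding E1_def
    proof (rule integral_mono)
      show "integrable MY (\<lambda>y. tent 1 (1 / (4 * real K)) (N (Y j y)))" using K by (intro intt) simp
      show "integrable MY (\<lambda>y. tent x e (x * N (Y j y)))"
        using tent_bd[OF e] by (intro PY.integrable_const_bound[where B=1]) auto
      fix y
      have a: "\<bar>x * N (Y j y) - x\<bar> / e = x * \<bar>N (Y j y) - 1\<bar> / e"
      proof -
        have "x * N (Y j y) - x = x * (N (Y j y) - 1)" by (simp add: algebra_simps)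
        thus ?thesis using x1 by (simp add: abs_mult)
      qed
      have b: "x * \<bar>N (Y j y) - 1\<bar> / e \<le> \<bar>N (Y j y) - 1\<bar> / (1 / (4 * real K))"
        using x2 e K by (simp add: e_def field_simps mult_right_mono)
      show "tent 1 (1 / (4 * real K)) (N (Y j y)) \<le> tent x e (x * N (Y j y))"
      proof -
        have "1 - \<bar>N (Y j y) - 1\<bar> / (1 / (4 * real K)) \<le> 1 - \<bar>x * N (Y j y) - x\<bar> / e"
          unfolding a by (rule diff_left_mono[OF b])
        thus ?thesis unfolding tent_def by (rule max.mono[OF order_refl])
      qed
    qed
    moreover have "x powr (-\<alpha>) * (\<integral>y. tent x e (x * N (Y j y)) \<partial>MY) \<le> (\<integral>y. tent x e (N (Y j y)) \<partial>MY)"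
      using scale_ineq[OF tent_cont tent_bd[OF e] x1] .
    moreover have "2 powr (-\<alpha>) \<le> x powr (-\<alpha>)"
      using x1 x2 alpha by (simp add: powr_minus divide_inverse[symmetric] le_divide_eq powr_mono2)
    moreover have "E1 \<ge> 0" unfolding E1_def using tent_bd[of "1 / (4 * real K)"] K
      by (intro Bochner_Integration.integral_nonneg) auto
    moreover have "0 \<le> (\<integral>y. tent x e (x * N (Y j y)) \<partial>MY)" using tent_bd[OF e]
      by (intro Bochner_Integration.integral_nonneg) auto
    ultimately have "2 powr (-\<alpha>) * E1 \<le> x powr (-\<alpha>) * (\<integral>y. tent x e (x * N (Y j y)) \<partial>MY)"
      by (intro mult_mono) auto
    thus ?thesis using \<open>x powr (-\<alpha>) * _ \<le> _\<close> unfolding x_def by linarith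
  qed
  have "real K * (2 powr (-\<alpha>) * E1) = (\<Sum>i<K. 2 powr (-\<alpha>) * E1)" by simp
  also have "\<dots> \<le> (\<Sum>i<K. (\<integral>y. tent (1 + real i / K) e (N (Y j y)) \<partial>MY))"
    by (intro sum_mono each) simp
  also have "\<dots> = (\<integral>y. (\<Sum>i<K. tent (1 + real i / K) e (N (Y j y))) \<partial>MY)"
    using Bochner_Integration.integral_sum[where I="{..<K}" and M=MY and f="\<lambda>i y. tent (1 + real i / K) e (N (Y j y))"] intt[OF e] by simp
  also have "\<dots> \<le> (\<integral>y. 1 \<partial>MY)"
  proof (rule integral_mono)
    show "integrable MY (\<lambda>y. \<Sum>i<K. tent (1 + real i / real K) e (N (Y j y)))"
      using intt[OF e] by (intro Bochner_Integration.integrable_sum) auto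
    show "integrable MY (\<lambda>y. 1::real)" by simp
    fix y show "(\<Sum>i<K. tent (1 + real i / real K) e (N (Y j y))) \<le> 1"
      using tent_sum_le1[OF K] unfolding e_def by simp
  qed
  also have "\<dots> = 1" by (simp add: PY.prob_space)
  finally have "real K * (2 powr (-\<alpha>) * E1) \<le> 1" .
  hence "E1 \<le> 1 / (real K * 2 powr (-\<alpha>))" using K by (simp add: field_simps)
  also have "\<dots> = 2 powr \<alpha> / K" by (simp add: powr_minus field_simps)
  finally show ?thesis unfolding E1_def .
qed


definition Wset :: "nat \<Rightarrow> real \<Rightarrow> 'w set" where
  "Wset l v = {\<omega>\<in>space M. N (X 0 \<omega>) > v \<and> (\<forall>k\<in>{- int l..<0}. N (X k \<omega>) \<le> v)}"
definition Dv :: "real \<Rightarrow> real" where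
  "Dv v = measure M {\<omega>\<in>space M. N (X 0 \<omega>) > v}"
definition thl :: "nat \<Rightarrow> real" where
  "thl l = measure MY {y\<in>space MY. \<forall>k\<in>{- int l..<0}. N (Y k y) \<le> 1}"

lemma intiM: "A \<in> sets M \<Longrightarrow> integrable M (indicator A :: 'w \<Rightarrow> real)"
  by (intro PM.integrable_const_bound[where B=1]) (auto simp: indicator_def)
lemma intiY: "A \<in> sets MY \<Longrightarrow> integrable MY (indicator A :: 'v \<Rightarrow> real)"
  by (intro PY.integrable_const_bound[where B=1]) (auto simp: indicator_def)

lemma Wset_sets[measurable]: "Wset l v \<in> sets M"
  unfolding Wset_def by measurable

lemma win_lim:
  assumes l: "l \<ge> 1" and d: "d > 0"
  shows "\<forall>\<^sub>F v in at_top. \<bar>measure M (Wset l v) / Dv v - thl l\<bar> < d"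
proof -
  define W where "W = {- int l..<0}"
  have finW: "finite W" unfolding W_def by simp
  have cardW: "card W = l" unfolding W_def by simp
  have W_sub: "W \<subseteq> {- int l..-1}" "- int l \<le> -1" unfolding W_def using l by auto
  obtain K :: nat where K: "K > 4 * l * 2 powr \<alpha> / d" using reals_Archimedean2 by blast
  have Kp: "K > 0" using K d by (metis gr0I of_nat_0 divide_nonneg_pos zero_le_mult_iff zero_le_numeral
        of_nat_0_le_iff powr_ge_zero mult_nonneg_nonneg not_less)
  define e where "e = 1 / (8 * real K)"
  have e: "e > 0" using Kp by (simp add: e_def)
  define gp where "gp = (\<lambda>z::int \<Rightarrow> real. \<Prod>k\<in>W. phip e (z k))"
  define gm where "gm = (\<lambda>z::int \<Rightarrow> real. \<Prod>k\<in>W. phim e (z k))"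
  have [measurable]: "phip e \<in> borel_measurable borel" "phim e \<in> borel_measurable borel"
    "tent c e' \<in> borel_measurable borel" for c e'
    using phip_cont phim_cont tent_cont by (auto simp: borel_measurable_continuous_onI)
  define Ep where "Ep = (\<integral>y. gp (\<lambda>k. N (Y k y)) \<partial>MY)"
  define Em where "Em = (\<integral>y. gm (\<lambda>k. N (Y k y)) \<partial>MY)"
  have intp: "integrable MY (\<lambda>y. gp (\<lambda>k. N (Y k y)))" unfolding gp_def
    using phip_bd by (intro PY.integrable_const_bound[where B=1]) (auto intro!: prod_le_1 simp: abs_prod)
  have intm: "integrable MY (\<lambda>y. gm (\<lambda>k. N (Y k y)))" unfolding gm_def
    using phim_bd by (intro PY.integrable_const_bound[where B=1]) (auto intro!: prod_le_1 simp: abs_prod)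
  define TS where "TS = {y\<in>space MY. \<forall>k\<in>W. N (Y k y) \<le> 1}"
  have TS[measurable]: "TS \<in> sets MY" unfolding TS_def W_def by measurable
  have th: "thl l = (\<integral>y. indicator TS y \<partial>MY)" unfolding thl_def TS_def W_def by simp
  have Em_le: "Em \<le> thl l" unfolding th Em_def
  proof (rule integral_mono[OF intm])
    show "integrable MY (indicat_real TS)" by (rule intiY[OF TS])
    fix y assume y: "y \<in> space MY"
    show "gm (\<lambda>k. N (Y k y)) \<le> indicat_real TS y"
    proof (cases "y \<in> TS")
      case True then show ?thesis unfolding gm_def using phim_bd by (auto intro!: prod_le_1)
    next
      case False
      then obtain k where k: "k \<in> W" "N (Y k y) > 1" using y unfolding TS_def by auto
      hence "gm (\<lambda>k. N (Y k y)) = 0" unfolding gm_def using finW phim_le[OF e] by (auto intro: prod_zero)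
      then show ?thesis using False by simp
    qed
  qed
  have Ep_ge: "thl l \<le> Ep" unfolding th Ep_def
  proof (rule integral_mono[OF _ intp])
    show "integrable MY (indicat_real TS)" by (rule intiY[OF TS])
    fix y assume y: "y \<in> space MY"
    show "indicat_real TS y \<le> gp (\<lambda>k. N (Y k y))"
    proof (cases "y \<in> TS")
      case True
      hence "gp (\<lambda>k. N (Y k y)) = 1" unfolding gp_def TS_def using phip_ge[OF e] by auto
      then show ?thesis by simp
    next
      case False then show ?thesis unfolding gp_def using phip_bd by (auto intro!: prod_nonneg)
    qed
  qed
  have gap: "Ep - Em \<le> d / 2"
  proof -
    have "Ep - Em = (\<integral>y. gp (\<lambda>k. N (Y k y)) - gm (\<lambda>k. N (Y k y)) \<partial>MY)"
      unfolding Ep_def Em_def using intp intm by simp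
    also have "\<dots> \<le> (\<integral>y. (\<Sum>k\<in>W. 2 * tent 1 (2 * e) (N (Y k y))) \<partial>MY)"
    proof (rule integral_mono)
      show "integrable MY (\<lambda>y. gp (\<lambda>k. N (Y k y)) - gm (\<lambda>k. N (Y k y)))" using intp intm by simp
      show "integrable MY (\<lambda>y. \<Sum>k\<in>W. 2 * tent 1 (2 * e) (N (Y k y)))"
        using tent_bd e by (intro Bochner_Integration.integrable_sum integrable_mult_right PY.integrable_const_bound[where B=1]) auto
      fix y
      have "gp (\<lambda>k. N (Y k y)) - gm (\<lambda>k. N (Y k y)) \<le> (\<Sum>k\<in>W. phip e (N (Y k y)) - phim e (N (Y k y)))"
        unfolding gp_def gm_def using finW phim_bd phip_bd phim_le_phip[OF e] by (intro prod_diff_le) auto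
      also have "\<dots> \<le> (\<Sum>k\<in>W. 2 * tent 1 (2 * e) (N (Y k y)))"
        by (intro sum_mono phi_gap e)
      finally show "gp (\<lambda>k. N (Y k y)) - gm (\<lambda>k. N (Y k y)) \<le> (\<Sum>k\<in>W. 2 * tent 1 (2 * e) (N (Y k y)))" .
    qed
    also have "\<dots> = (\<Sum>k\<in>W. 2 * (\<integral>y. tent 1 (1 / (4 * real K)) (N (Y k y)) \<partial>MY))"
    proof -
      have ee: "2 * e = 1 / (4 * real K)" unfolding e_def by simp
      show ?thesis unfolding ee
        using Bochner_Integration.integral_sum[where I=W and M=MY and f="\<lambda>k y. 2 * tent 1 (1 / (4 * real K)) (N (Y k y))"]
          tent_bd[of "1 / (4 * real K)"] Kp
        by (simp add: PY.integrable_const_bound[where B=1])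
    qed
    also have "\<dots> \<le> (\<Sum>k\<in>W. 2 * (2 powr \<alpha> / K))"
      by (intro sum_mono mult_left_mono atom_bound Kp) auto
    also have "\<dots> = 2 * l * 2 powr \<alpha> / K" using cardW by simp
    also have "\<dots> \<le> d / 2"
    proof -
      have "4 * l * 2 powr \<alpha> < d * K" using K d by (simp add: field_simps)
      thus ?thesis using Kp by (simp add: field_simps)
    qed
    finally show ?thesis .
  qed
  have limp: "((\<lambda>v. (\<integral>\<omega>. (\<Prod>k\<in>W. phip e (N (X k \<omega> /\<^sub>R v))) * indicator {\<omega>\<in>space M. N (X 0 \<omega>) > v} \<omega> \<partial>M)
               / Dv v) \<longlongrightarrow> Ep) at_top"
    using tail_prod[OF phip_cont phip_bd W_sub] unfolding Dv_def Ep_def gp_def by simp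
  have limm: "((\<lambda>v. (\<integral>\<omega>. (\<Prod>k\<in>W. phim e (N (X k \<omega> /\<^sub>R v))) * indicator {\<omega>\<in>space M. N (X 0 \<omega>) > v} \<omega> \<partial>M)
               / Dv v) \<longlongrightarrow> Em) at_top"
    using tail_prod[OF phim_cont phim_bd W_sub] unfolding Dv_def Em_def gm_def by simp
  have d2: "d / 2 > 0" using d by simp
  have ep: "\<forall>\<^sub>F v in at_top. (\<integral>\<omega>. (\<Prod>k\<in>W. phip e (N (X k \<omega> /\<^sub>R v))) * indicator {\<omega>\<in>space M. N (X 0 \<omega>) > v} \<omega> \<partial>M)
               / Dv v < Ep + d / 2"
    using order_tendstoD(2)[OF limp, of "Ep + d/2"] d by simp
  have em: "\<forall>\<^sub>F v in at_top. (\<integral>\<omega>. (\<Prod>k\<in>W. phim e (N (X k \<omega> /\<^sub>R v))) * indicator {\<omega>\<in>space M. N (X 0 \<omega>) > v} \<omega> \<partial>M)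
               / Dv v > Em - d / 2"
    using order_tendstoD(1)[OF limm, of "Em - d/2"] d by simp
  show ?thesis using ep em tpos eventually_gt_at_top[of 0]
  proof eventually_elim
    case (elim v)
    have Dp: "Dv v > 0" using elim unfolding Dv_def by simp
    have v: "v > 0" using elim by simp
    have i1: "integrable M (\<lambda>\<omega>. (\<Prod>k\<in>W. phip e (N (X k \<omega> /\<^sub>R v))) * indicator {\<omega>\<in>space M. N (X 0 \<omega>) > v} \<omega>)"
      using phip_bd by (intro int_bd[where B=1]) (auto simp: indicator_def abs_prod intro!: prod_le_1)
    have i2: "integrable M (\<lambda>\<omega>. (\<Prod>k\<in>W. phim e (N (X k \<omega> /\<^sub>R v))) * indicator {\<omega>\<in>space M. N (X 0 \<omega>) > v} \<omega>)"
      using phim_bd by (intro int_bd[where B=1]) (auto simp: indicator_def abs_prod intro!: prod_le_1)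
    have mW: "measure M (Wset l v) = (\<integral>\<omega>. indicator (Wset l v) \<omega> \<partial>M)" by simp
    have up: "measure M (Wset l v) \<le> (\<integral>\<omega>. (\<Prod>k\<in>W. phip e (N (X k \<omega> /\<^sub>R v))) * indicator {\<omega>\<in>space M. N (X 0 \<omega>) > v} \<omega> \<partial>M)"
      unfolding mW
    proof (rule integral_mono[OF _ i1])
      show "integrable M (indicat_real (Wset l v))" by (rule intiM) simp
      fix \<omega> assume \<omega>: "\<omega> \<in> space M"
      show "indicat_real (Wset l v) \<omega> \<le> (\<Prod>k\<in>W. phip e (N (X k \<omega> /\<^sub>R v))) * indicator {\<omega>\<in>space M. N (X 0 \<omega>) > v} \<omega>"
      proof (cases "\<omega> \<in> Wset l v")
        case True
        have "(\<Prod>k\<in>W. phip e (N (X k \<omega> /\<^sub>R v))) = 1"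
          using True v e unfolding Wset_def W_def
          by (auto simp: norm_scale[OF norm] phip_ge intro!: prod.neutral)
        then show ?thesis using True \<omega> unfolding Wset_def by simp
      next
        case False then show ?thesis using phip_bd by (auto simp: indicator_def intro!: prod_nonneg)
      qed
    qed
    have lo: "(\<integral>\<omega>. (\<Prod>k\<in>W. phim e (N (X k \<omega> /\<^sub>R v))) * indicator {\<omega>\<in>space M. N (X 0 \<omega>) > v} \<omega> \<partial>M) \<le> measure M (Wset l v)"
      unfolding mW
    proof (rule integral_mono[OF i2])
      show "integrable M (indicat_real (Wset l v))" by (rule intiM) simp
      fix \<omega> assume \<omega>: "\<omega> \<in> space M"
      show "(\<Prod>k\<in>W. phim e (N (X k \<omega> /\<^sub>R v))) * indicator {\<omega>\<in>space M. N (X 0 \<omega>) > v} \<omega> \<le> indicat_real (Wset l v) \<omega>"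
      proof (cases "\<omega> \<in> Wset l v")
        case True then show ?thesis using phim_bd by (auto simp: indicator_def intro!: prod_le_1)
      next
        case False
        show ?thesis
        proof (cases "N (X 0 \<omega>) > v")
          case True
          then obtain k where k: "k \<in> W" "N (X k \<omega>) > v" using False \<omega> unfolding Wset_def W_def by auto
          have "N (X k \<omega> /\<^sub>R v) > 1" using k v by (simp add: norm_scale[OF norm])
          hence "(\<Prod>k\<in>W. phim e (N (X k \<omega> /\<^sub>R v))) = 0" using k finW phim_le[OF e] by (auto intro: prod_zero)
          then show ?thesis by simp
        next
          case F2: False then show ?thesis by (simp add: indicator_def)
        qed
      qed
    qed
    have "measure M (Wset l v) / Dv v < Ep + d/2" using up elim(1) Dp by (smt (verit) divide_right_mono)
    moreover have "measure M (Wset l v) / Dv v > Em - d/2" using lo elim(2) Dp by (smt (verit) divide_right_mono)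
    ultimately show ?case using Em_le Ep_ge gap by linarith
  qed
qed


abbreviation "PP \<equiv> PiM (UNIV :: int set) (\<lambda>_. (borel :: (real ^ 'd) measure))"

lemma Zmeas[measurable]: "(\<lambda>\<omega> k. X (k + m) \<omega>) \<in> measurable M PP"
  by (rule measurable_PiM_single') auto

lemma shift_law: "distr M PP (\<lambda>\<omega> k. X (k + int m) \<omega>) = distr M PP (\<lambda>\<omega> k. X k \<omega>)"
proof (induction m)
  case 0 then show ?case by simp
next
  case (Suc m)
  define S where "S = (\<lambda>(z::int \<Rightarrow> real ^ 'd) k. z (k + 1))"
  have Sm: "S \<in> measurable PP PP" unfolding S_def by (rule measurable_PiM_single') auto
  have "distr M PP (\<lambda>\<omega> k. X (k + int (Suc m)) \<omega>) = distr M PP (S \<circ> (\<lambda>\<omega> k. X (k + int m) \<omega>))"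
    unfolding S_def by (simp add: o_def ac_simps)
  also have "\<dots> = distr (distr M PP (\<lambda>\<omega> k. X (k + int m) \<omega>)) PP S"
    by (rule distr_distr[symmetric, OF Sm]) simp
  also have "\<dots> = distr (distr M PP (\<lambda>\<omega> k. X k \<omega>)) PP S" using Suc by simp
  also have "\<dots> = distr M PP (S \<circ> (\<lambda>\<omega> k. X k \<omega>))"
    by (rule distr_distr[OF Sm]) (rule measurable_PiM_single', auto)
  also have "\<dots> = distr M PP (\<lambda>\<omega> k. X (k + 1) \<omega>)" unfolding S_def by (simp add: o_def)
  also have "\<dots> = distr M PP (\<lambda>\<omega> k. X k \<omega>)" using stat unfolding strictly_stationary_def by simp
  finally show ?case .
qed

lemma shift_prob:
  assumes B: "B \<in> sets PP"
  shows "measure M {\<omega>\<in>space M. (\<lambda>k. X (k + int m) \<omega>) \<in> B} = measure M {\<omega>\<in>space M. (\<lambda>k. X k \<omega>) \<in> B}"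
proof -
  have m0: "(\<lambda>\<omega> k. X k \<omega>) \<in> measurable M PP" by (rule measurable_PiM_single') auto
  have "measure M {\<omega>\<in>space M. (\<lambda>k. X (k + int m) \<omega>) \<in> B} = measure (distr M PP (\<lambda>\<omega> k. X (k + int m) \<omega>)) B"
    by (subst measure_distr[OF _ B]) (auto intro!: arg_cong[where f="measure M"])
  also have "\<dots> = measure (distr M PP (\<lambda>\<omega> k. X k \<omega>)) B" by (simp add: shift_law)
  also have "\<dots> = measure M {\<omega>\<in>space M. (\<lambda>k. X k \<omega>) \<in> B}"
    by (subst measure_distr[OF m0 B]) (auto intro!: arg_cong[where f="measure M"])
  finally show ?thesis .
qed

lemma ball_shift: "(\<forall>k\<in>{a..<b}. P (k + c)) \<longleftrightarrow> (\<forall>k\<in>{a + c..<b + c}. P (k::int))"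
proof
  assume h: "\<forall>k\<in>{a..<b}. P (k + c)"
  show "\<forall>k\<in>{a + c..<b + c}. P k"
  proof
    fix k assume "k \<in> {a + c..<b + c}"
    hence "k - c \<in> {a..<b}" by auto
    thus "P k" using h by force
  qed
qed auto

lemma G_prob:
  "measure M {\<omega>\<in>space M. N (X (int i) \<omega>) > v \<and> (\<forall>k\<in>{int i - int l..<int i}. N (X k \<omega>) \<le> v)} = measure M (Wset l v)"
proof -
  define B where "B = {z\<in>space PP. N (z 0) > v \<and> (\<forall>k\<in>{- int l..<0}. N (z k) \<le> v)}"
  have B: "B \<in> sets PP" unfolding B_def by measurable
  have "{\<omega>\<in>space M. N (X (int i) \<omega>) > v \<and> (\<forall>k\<in>{int i - int l..<int i}. N (X k \<omega>) \<le> v)} =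
        {\<omega>\<in>space M. (\<lambda>k. X (k + int i) \<omega>) \<in> B}"
    unfolding B_def using ball_shift[of "- int l" 0 "\<lambda>k. N (X k _) \<le> v" "int i"]
    by (auto simp: space_PiM)
  moreover have "Wset l v = {\<omega>\<in>space M. (\<lambda>k. X k \<omega>) \<in> B}"
    unfolding B_def Wset_def by (auto simp: space_PiM)
  ultimately show ?thesis using shift_prob[OF B, of i] by simp
qed

lemma J_prob:
  "measure M {\<omega>\<in>space M. N (X (int i) \<omega>) > v \<and> N (X (int i + int d) \<omega>) > v} =
   measure M {\<omega>\<in>space M. N (X 0 \<omega>) > v \<and> N (X (int d) \<omega>) > v}"
proof -
  define B where "B = {z\<in>space PP. N (z 0) > v \<and> N (z (int d)) > v}"
  have B: "B \<in> sets PP" unfolding B_def by measurable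
  have "{\<omega>\<in>space M. N (X (int i) \<omega>) > v \<and> N (X (int i + int d) \<omega>) > v} =
        {\<omega>\<in>space M. (\<lambda>k. X (k + int i) \<omega>) \<in> B}"
    unfolding B_def by (auto simp: space_PiM add.commute)
  moreover have "{\<omega>\<in>space M. N (X 0 \<omega>) > v \<and> N (X (int d) \<omega>) > v} = {\<omega>\<in>space M. (\<lambda>k. X k \<omega>) \<in> B}"
    unfolding B_def by (auto simp: space_PiM)
  ultimately show ?thesis using shift_prob[OF B, of i] by simp
qed


definition Fset :: "real \<Rightarrow> nat \<Rightarrow> 'w set" where
  "Fset v i = {\<omega>\<in>space M. N (X (int i) \<omega>) > v \<and> (\<forall>k\<in>{1..<i}. N (X (int k) \<omega>) \<le> v)}"
definition Jset :: "real \<Rightarrow> nat \<Rightarrow> nat \<Rightarrow> 'w set" where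
  "Jset v i d = {\<omega>\<in>space M. N (X (int i) \<omega>) > v \<and> N (X (int i + int d) \<omega>) > v}"
definition qd :: "real \<Rightarrow> nat \<Rightarrow> real" where
  "qd v d = measure M {\<omega>\<in>space M. N (X 0 \<omega>) > v \<and> N (X (int d) \<omega>) > v}"

lemma Fset_sets[measurable]: "Fset v i \<in> sets M" unfolding Fset_def by measurable
lemma Jset_sets[measurable]: "Jset v i d \<in> sets M" unfolding Jset_def by measurable

lemma exc_fin: "finite (exc_times X N r v \<omega>)" "exc_times X N r v \<omega> \<subseteq> {1..r}"
  unfolding exc_times_def by auto

lemma Fset_iff:
  assumes "\<omega> \<in> space M" "i \<in> {1..r}"
  shows "\<omega> \<in> Fset v i \<longleftrightarrow> exc_times X N r v \<omega> \<noteq> {} \<and> i = Min (exc_times X N r v \<omega>)"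
proof -
  let ?S = "exc_times X N r v \<omega>"
  show ?thesis
  proof
    assume F: "\<omega> \<in> Fset v i"
    hence iS: "i \<in> ?S" using assms unfolding Fset_def exc_times_def by auto
    have "\<forall>k\<in>?S. i \<le> k"
    proof
      fix k assume kS: "k \<in> ?S"
      show "i \<le> k"
      proof (rule ccontr)
        assume "\<not> i \<le> k"
        hence "k \<in> {1..<i}" using kS unfolding exc_times_def by auto
        thus False using F kS unfolding Fset_def exc_times_def by force
      qed
    qed
    thus "?S \<noteq> {} \<and> i = Min ?S" using iS exc_fin by (intro conjI) (auto intro!: Min_eqI[symmetric])
  next
    assume h: "?S \<noteq> {} \<and> i = Min ?S"
    have iS: "i \<in> ?S" using h exc_fin Min_in by metis
    have "\<forall>k\<in>{1..<i}. N (X (int k) \<omega>) \<le> v"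
    proof
      fix k assume k: "k \<in> {1..<i}"
      show "N (X (int k) \<omega>) \<le> v"
      proof (rule ccontr)
        assume "\<not> N (X (int k) \<omega>) \<le> v"
        hence "k \<in> ?S" using k assms unfolding exc_times_def by auto
        hence "Min ?S \<le> k" using exc_fin by simp
        thus False using h k by auto
      qed
    qed
    thus "\<omega> \<in> Fset v i" using iS assms unfolding Fset_def exc_times_def by auto
  qed
qed

lemma sum_Fset:
  assumes "\<omega> \<in> space M"
  shows "(\<Sum>i\<in>{1..r}. a i * indicator (Fset v i) \<omega>) =
    (if exc_times X N r v \<omega> \<noteq> {} then a (Min (exc_times X N r v \<omega>)) else (0::real))"
proof (cases "exc_times X N r v \<omega> = {}")
  case True
  hence "\<And>i. i \<in> {1..r} \<Longrightarrow> \<omega> \<notin> Fset v i" using Fset_iff[OF assms] by blast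
  then show ?thesis using True by simp
next
  case False
  let ?m = "Min (exc_times X N r v \<omega>)"
  have m: "?m \<in> {1..r}" using False exc_fin Min_in by blast
  have "(\<Sum>i\<in>{1..r}. a i * indicator (Fset v i) \<omega>) =
        a ?m * indicator (Fset v ?m) \<omega> + (\<Sum>i\<in>{1..r} - {?m}. a i * indicator (Fset v i) \<omega>)"
    using m by (subst sum.remove[of _ ?m]) auto
  also have "(\<Sum>i\<in>{1..r} - {?m}. a i * indicator (Fset v i) \<omega>) = 0"
    using Fset_iff[OF assms] by (intro sum.neutral) auto
  also have "indicator (Fset v ?m) \<omega> = (1::real)" using Fset_iff[OF assms m] False by simp
  finally show ?thesis using False by simp
qed


end



context tset begin

lemma Ig_val:
  fixes f :: "real \<Rightarrow> real \<Rightarrow> real"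
  assumes "\<omega> \<in> space M"
  shows "f (real (t_first X N r v \<omega>)) (real (t_last X N r v \<omega>)) * indicator (A1 M X N r v) \<omega> =
    (if exc_times X N r v \<omega> \<noteq> {} then f (real (Min (exc_times X N r v \<omega>))) (real (Max (exc_times X N r v \<omega>))) else 0)"
  using assms unfolding A1_def t_first_def t_last_def by (simp add: indicator_def)

lemma Ig_meas:
  fixes f :: "real \<Rightarrow> real \<Rightarrow> real"
  shows "(\<lambda>\<omega>. f (real (t_first X N r v \<omega>)) (real (t_last X N r v \<omega>)) * indicator (A1 M X N r v) \<omega>) \<in> borel_measurable M"
proof -
  define H where "H = (\<lambda>S::nat set. if S = {} then 0 else f (real (Min S)) (real (Max S)))"
  have em: "exc_times X N r v \<in> measurable M (count_space (Pow {1..r}))"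
  proof (subst measurable_count_space_eq2)
    show "finite (Pow {1..r})" by simp
    show "exc_times X N r v \<in> space M \<rightarrow> Pow {1..r} \<and>
      (\<forall>a\<in>Pow {1..r}. exc_times X N r v -` {a} \<inter> space M \<in> sets M)"
    proof (intro conjI ballI)
      show "exc_times X N r v \<in> space M \<rightarrow> Pow {1..r}" using exc_fin by auto
      fix a assume a: "a \<in> Pow {1..r}"
      have "exc_times X N r v -` {a} \<inter> space M = {\<omega>\<in>space M. \<forall>i\<in>{1..r}. (i \<in> a \<longleftrightarrow> N (X (int i) \<omega>) > v)}"
      proof (intro set_eqI iffI)
        fix \<omega> assume "\<omega> \<in> exc_times X N r v -` {a} \<inter> space M"
        thus "\<omega> \<in> {\<omega>\<in>space M. \<forall>i\<in>{1..r}. (i \<in> a \<longleftrightarrow> N (X (int i) \<omega>) > v)}"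
          unfolding exc_times_def by auto
      next
        fix \<omega> assume h: "\<omega> \<in> {\<omega>\<in>space M. \<forall>i\<in>{1..r}. (i \<in> a \<longleftrightarrow> N (X (int i) \<omega>) > v)}"
        have "exc_times X N r v \<omega> = a"
        proof (intro set_eqI iffI)
          fix i assume "i \<in> exc_times X N r v \<omega>" thus "i \<in> a" using h unfolding exc_times_def by auto
        next
          fix i assume ia: "i \<in> a"
          hence "i \<in> {1..r}" using a by blast
          thus "i \<in> exc_times X N r v \<omega>" using h ia unfolding exc_times_def by auto
        qed
        thus "\<omega> \<in> exc_times X N r v -` {a} \<inter> space M" using h by auto
      qed
      also have "\<dots> \<in> sets M" by measurable
      finally show "exc_times X N r v -` {a} \<inter> space M \<in> sets M" .
    qed
  qed
  have meas: "(\<lambda>\<omega>. H (exc_times X N r v \<omega>)) \<in> borel_measurable M"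
    by (rule measurable_compose[OF em]) simp
  have eq: "\<And>\<omega>. \<omega> \<in> space M \<Longrightarrow> H (exc_times X N r v \<omega>) =
      f (real (t_first X N r v \<omega>)) (real (t_last X N r v \<omega>)) * indicator (A1 M X N r v) \<omega>"
    unfolding H_def by (simp only: Ig_val) simp
  show ?thesis by (rule measurable_cong[THEN iffD1, OF eq meas])
qed

lemma f_int:
  fixes f :: "real \<Rightarrow> real \<Rightarrow> real"
  assumes f_hom: "\<And>a b s t. a > 0 \<Longrightarrow> b > 0 \<Longrightarrow> s > 0 \<Longrightarrow> t > 0 \<Longrightarrow>
                  f (a * s) (b * t) = a powr g1 * b powr g2 * f s t"
    and "a \<ge> 1" "b \<ge> 1"
  shows "f (real a) (real b) = real a powr g1 * real b powr g2 * f 1 1"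
  using f_hom[of "real a" "real b" 1 1] assms(2,3) by simp

lemma S_facts:
  assumes "exc_times X N r v \<omega> \<noteq> {}"
  shows "Min (exc_times X N r v \<omega>) \<in> exc_times X N r v \<omega>" "Max (exc_times X N r v \<omega>) \<in> exc_times X N r v \<omega>"
    "1 \<le> Min (exc_times X N r v \<omega>)" "Min (exc_times X N r v \<omega>) \<le> Max (exc_times X N r v \<omega>)"
    "Max (exc_times X N r v \<omega>) \<le> r"
proof -
  have fin: "finite (exc_times X N r v \<omega>)" by (rule exc_fin)
  show a: "Min (exc_times X N r v \<omega>) \<in> exc_times X N r v \<omega>" using Min_in[OF fin assms] .
  show b: "Max (exc_times X N r v \<omega>) \<in> exc_times X N r v \<omega>" using Max_in[OF fin assms] .
  show "1 \<le> Min (exc_times X N r v \<omega>)" using a unfolding exc_times_def by simp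
  show "Min (exc_times X N r v \<omega>) \<le> Max (exc_times X N r v \<omega>)" using Min_le[OF fin b] .
  show "Max (exc_times X N r v \<omega>) \<le> r" using b unfolding exc_times_def by simp
qed

lemma pw_lower:
  fixes f :: "real \<Rightarrow> real \<Rightarrow> real"
  assumes f_hom: "\<And>a b s t. a > 0 \<Longrightarrow> b > 0 \<Longrightarrow> s > 0 \<Longrightarrow> t > 0 \<Longrightarrow>
                  f (a * s) (b * t) = a powr g1 * b powr g2 * f s t"
    and g1: "g1 \<ge> 0" and g2: "g2 \<ge> 0" and c: "f 1 1 \<ge> 0"
    and \<omega>: "\<omega> \<in> space M"
  shows "(\<Sum>i\<in>{1..r}. (f 1 1 * real i powr (g1+g2)) * indicator (Fset v i) \<omega>)
           \<le> f (real (t_first X N r v \<omega>)) (real (t_last X N r v \<omega>)) * indicator (A1 M X N r v) \<omega>"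
proof -
  let ?S = "exc_times X N r v \<omega>"
  note s1 = sum_Fset[OF \<omega>, where r=r and a="\<lambda>i. f 1 1 * real i powr (g1+g2)" and v=v]
  show ?thesis
  proof (cases "?S = {}")
    case True
    show ?thesis unfolding s1 Ig_val[OF \<omega>] using True by simp
  next
    case False
    let ?a = "Min ?S" and ?b = "Max ?S"
    note F = S_facts[OF False]
    have a1: "?a \<ge> 1" "?b \<ge> 1" using F by linarith+
    have Ig: "f (real ?a) (real ?b) = real ?a powr g1 * real ?b powr g2 * f 1 1"
      by (rule f_int[OF f_hom a1])
    have "f 1 1 * real ?a powr (g1+g2) = real ?a powr g1 * real ?a powr g2 * f 1 1"
      by (simp add: powr_add)
    also have "real ?a powr g2 \<le> real ?b powr g2" using F(4) g2 by (intro powr_mono2) auto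
    hence "real ?a powr g1 * real ?a powr g2 * f 1 1 \<le> real ?a powr g1 * real ?b powr g2 * f 1 1"
      using c by (intro mult_right_mono mult_left_mono) auto
    finally show ?thesis unfolding s1 Ig_val[OF \<omega>] using False Ig by simp
  qed
qed

lemma pw_upper:
  fixes f :: "real \<Rightarrow> real \<Rightarrow> real"
  assumes f_hom: "\<And>a b s t. a > 0 \<Longrightarrow> b > 0 \<Longrightarrow> s > 0 \<Longrightarrow> t > 0 \<Longrightarrow>
                  f (a * s) (b * t) = a powr g1 * b powr g2 * f s t"
    and g1: "g1 \<ge> 0" and g2: "g2 \<ge> 0" and c: "f 1 1 \<ge> 0"
    and \<omega>: "\<omega> \<in> space M"
  shows "f (real (t_first X N r v \<omega>)) (real (t_last X N r v \<omega>)) * indicator (A1 M X N r v) \<omega>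
           \<le> (\<Sum>i\<in>{1..r}. (f 1 1 * real (i + l) powr (g1+g2)) * indicator (Fset v i) \<omega>)
             + f 1 1 * real r powr (g1+g2) * (\<Sum>i\<in>{1..r}. \<Sum>d\<in>{l..r}. indicator (Jset v i d) \<omega>)"
proof -
  let ?S = "exc_times X N r v \<omega>"
  let ?J = "(\<Sum>i\<in>{1..r}. \<Sum>d\<in>{l..r}. indicator (Jset v i d) \<omega>) :: real"
  note s2 = sum_Fset[OF \<omega>, where r=r and a="\<lambda>i. f 1 1 * real (i + l) powr (g1+g2)" and v=v]
  have Jnn: "0 \<le> ?J" by (intro sum_nonneg) auto
  have rpos: "0 \<le> f 1 1 * real r powr (g1+g2) * ?J" using c Jnn by simp
  show ?thesis
  proof (cases "?S = {}")
    case True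
    show ?thesis unfolding s2 Ig_val[OF \<omega>] using True rpos by simp
  next
    case False
    let ?a = "Min ?S" and ?b = "Max ?S"
    note F = S_facts[OF False]
    have a1: "?a \<ge> 1" "?b \<ge> 1" using F by linarith+
    have Ig: "f (real ?a) (real ?b) = real ?a powr g1 * real ?b powr g2 * f 1 1"
      by (rule f_int[OF f_hom a1])
    have t1: "0 \<le> f 1 1 * real (?a + l) powr (g1+g2)" using c by simp
    show ?thesis
    proof (cases "?b < ?a + l")
      case True
      have p1: "real ?a powr g1 \<le> real (?a + l) powr g1" using g1 by (intro powr_mono2) auto
      have p2: "real ?b powr g2 \<le> real (?a + l) powr g2" using g2 True by (intro powr_mono2) auto
      have "real ?a powr g1 * real ?b powr g2 \<le> real (?a + l) powr g1 * real (?a + l) powr g2"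
        using p1 p2 by (intro mult_mono) auto
      hence "real ?a powr g1 * real ?b powr g2 * f 1 1 \<le> real (?a + l) powr g1 * real (?a + l) powr g2 * f 1 1"
        by (rule mult_right_mono[OF _ c])
      also have "\<dots> = f 1 1 * real (?a + l) powr (g1+g2)" by (simp add: powr_add)
      finally have "real ?a powr g1 * real ?b powr g2 * f 1 1 \<le> f 1 1 * real (?a + l) powr (g1+g2)" .
      thus ?thesis unfolding s2 Ig_val[OF \<omega>] using False Ig rpos by simp
    next
      case False2: False
      define d where "d = ?b - ?a"
      have d: "d \<in> {l..r}" using False2 F unfolding d_def by auto
      have J: "\<omega> \<in> Jset v ?a d"
      proof -
        have "int ?a + int d = int ?b" unfolding d_def using F(4) by simp
        thus ?thesis using F(1,2) \<omega> unfolding Jset_def exc_times_def by simp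
      qed
      have "(1::real) = indicator (Jset v ?a d) \<omega>" using J by simp
      also have "\<dots> \<le> (\<Sum>d\<in>{l..r}. indicator (Jset v ?a d) \<omega>)"
        by (rule member_le_sum[OF d]) auto
      also have "\<dots> \<le> ?J"
      proof (rule member_le_sum[where f="\<lambda>i. \<Sum>d\<in>{l..r}. indicator (Jset v i d) \<omega>"])
        show "?a \<in> {1..r}" using F by simp
      qed (auto intro!: sum_nonneg)
      finally have J1: "1 \<le> ?J" .
      have p1: "real ?a powr g1 \<le> real r powr g1" using g1 F by (intro powr_mono2) auto
      have p2: "real ?b powr g2 \<le> real r powr g2" using g2 F by (intro powr_mono2) auto
      have "real ?a powr g1 * real ?b powr g2 \<le> real r powr g1 * real r powr g2"
        using p1 p2 by (intro mult_mono) auto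
      hence "real ?a powr g1 * real ?b powr g2 * f 1 1 \<le> real r powr g1 * real r powr g2 * f 1 1"
        by (rule mult_right_mono[OF _ c])
      also have "\<dots> = f 1 1 * real r powr (g1+g2) * 1" by (simp add: powr_add)
      finally have "real ?a powr g1 * real ?b powr g2 * f 1 1 \<le> f 1 1 * real r powr (g1+g2) * 1" .
      also have "\<dots> \<le> f 1 1 * real r powr (g1+g2) * ?J"
        using J1 c by (intro mult_left_mono) auto
      finally show ?thesis unfolding s2 Ig_val[OF \<omega>] using False Ig t1 by simp
    qed
  qed
qed

end



context tset begin

lemma int_sum_ind:
  assumes "\<And>i. i \<in> I \<Longrightarrow> A i \<in> sets M"
  shows "(\<integral>\<omega>. (\<Sum>i\<in>I. a i * indicator (A i) \<omega>) \<partial>M) = (\<Sum>i\<in>I. a i * measure M (A i))"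
proof -
  have "(\<integral>\<omega>. (\<Sum>i\<in>I. a i * indicator (A i) \<omega>) \<partial>M) = (\<Sum>i\<in>I. (\<integral>\<omega>. a i * indicator (A i) \<omega> \<partial>M))"
    using assms by (intro Bochner_Integration.integral_sum integrable_mult_right intiM) auto
  also have "\<dots> = (\<Sum>i\<in>I. a i * measure M (A i))"
  proof (intro sum.cong refl)
    fix i assume "i \<in> I"
    hence "A i \<inter> space M = A i" using assms sets.sets_into_space by blast
    thus "(\<integral>\<omega>. a i * indicator (A i) \<omega> \<partial>M) = a i * measure M (A i)" by simp
  qed
  finally show ?thesis .
qed

lemma Wset0: "measure M (Wset 0 v) = Dv v"
  unfolding Wset_def Dv_def by simp

lemma measure_nn: "measure M A \<ge> 0" by simp

lemma F_lower:
  assumes i: "i \<in> {1..r}" and l: "l \<ge> 1"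
  shows "measure M (Fset v i) \<ge> measure M (Wset l v) - (\<Sum>d\<in>{l..r}. qd v d)"
proof -
  define G where "G = {\<omega>\<in>space M. N (X (int i) \<omega>) > v \<and> (\<forall>k\<in>{int i - int l..<int i}. N (X k \<omega>) \<le> v)}"
  define A where "A = {1..<i-l}"
  define H where "H = (\<Union>k\<in>A. Jset v k (i-k))"
  have G[measurable]: "G \<in> sets M" unfolding G_def by measurable
  have PG: "measure M G = measure M (Wset l v)" unfolding G_def by (rule G_prob)
  have H[measurable]: "H \<in> sets M" unfolding H_def A_def by measurable
  have sub: "G \<subseteq> Fset v i \<union> H"
  proof
    fix \<omega> assume g: "\<omega> \<in> G"
    show "\<omega> \<in> Fset v i \<union> H"
    proof (cases "\<omega> \<in> Fset v i")
      case False
      then obtain k where k: "k \<in> {1..<i}" "N (X (int k) \<omega>) > v" using g unfolding G_def Fset_def by auto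
      have "\<not> int k \<ge> int i - int l"
      proof
        assume "int k \<ge> int i - int l"
        hence "int k \<in> {int i - int l..<int i}" using k by auto
        hence "N (X (int k) \<omega>) \<le> v" using g unfolding G_def by blast
        thus False using k by linarith
      qed
      hence kA: "k \<in> A" using k unfolding A_def by auto
      have "int k + int (i - k) = int i" using k by auto
      hence "\<omega> \<in> Jset v k (i - k)" using g k unfolding G_def Jset_def by auto
      then show ?thesis using kA unfolding H_def by auto
    qed simp
  qed
  have "measure M G \<le> measure M (Fset v i \<union> H)" by (rule PM.finite_measure_mono[OF sub]) simp
  also have "\<dots> \<le> measure M (Fset v i) + measure M H" by (rule measure_Un_le) simp_all
  finally have 1: "measure M G \<le> measure M (Fset v i) + measure M H" .
  have "measure M H \<le> (\<Sum>k\<in>A. measure M (Jset v k (i-k)))"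
    unfolding H_def by (rule PM.finite_measure_subadditive_finite) (auto simp: A_def)
  also have "\<dots> = (\<Sum>k\<in>A. qd v (i-k))"
  proof (intro sum.cong refl)
    fix k assume "k \<in> A"
    hence "k \<le> i" unfolding A_def by auto
    thus "measure M (Jset v k (i - k)) = qd v (i - k)" unfolding Jset_def qd_def by (rule_tac J_prob) 
  qed
  also have "\<dots> = (\<Sum>d\<in>(\<lambda>k. i - k) ` A. qd v d)"
    by (subst sum.reindex) (auto simp: A_def inj_on_def)
  also have "\<dots> \<le> (\<Sum>d\<in>{l..r}. qd v d)"
    using i by (intro sum_mono2) (auto simp: A_def qd_def)
  finally have 2: "measure M H \<le> (\<Sum>d\<in>{l..r}. qd v d)" .
  show ?thesis using 1 2 PG by linarith
qed

lemma F_upper: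
  assumes i: "i \<in> {1..r}"
  shows "measure M (Fset v i) \<le> measure M (Wset l v) + (if i \<le> l then Dv v else 0)"
proof (cases "i \<le> l")
  case True
  define G where "G = {\<omega>\<in>space M. N (X (int i) \<omega>) > v \<and> (\<forall>k\<in>{int i - int 0..<int i}. N (X k \<omega>) \<le> v)}"
  have "Fset v i \<subseteq> G" unfolding Fset_def G_def by auto
  hence "measure M (Fset v i) \<le> measure M G" by (intro PM.finite_measure_mono) (auto simp: G_def)
  also have "\<dots> = Dv v" unfolding G_def using G_prob[where i=i and v=v and l=0] Wset0 by simp
  moreover have "measure M (Wset l v) \<ge> 0" by simp
  ultimately have "measure M (Fset v i) \<le> measure M (Wset l v) + Dv v" by linarith
  thus ?thesis using True by simp
next
  case False
  define G where "G = {\<omega>\<in>space M. N (X (int i) \<omega>) > v \<and> (\<forall>k\<in>{int i - int l..<int i}. N (X k \<omega>) \<le> v)}"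
  have "Fset v i \<subseteq> G"
  proof
    fix \<omega> assume F: "\<omega> \<in> Fset v i"
    have "N (X k \<omega>) \<le> v" if k: "k \<in> {int i - int l..<int i}" for k
    proof -
      have "nat k \<in> {1..<i}" "int (nat k) = k" using k False by auto
      thus ?thesis using F unfolding Fset_def by (metis (no_types, lifting) mem_Collect_eq)
    qed
    thus "\<omega> \<in> G" using F unfolding Fset_def G_def by auto
  qed
  hence "measure M (Fset v i) \<le> measure M G" by (intro PM.finite_measure_mono) (auto simp: G_def)
  also have "\<dots> = measure M (Wset l v)" unfolding G_def by (rule G_prob)
  finally show ?thesis using False by simp
qed

end



context tset begin

lemma sum_powr_le_r: "(\<Sum>i\<in>{1..r}. real i powr g) \<le> real r powr (g + 1)" if g: "g \<ge> 0" for r :: nat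
proof (cases "r = 0")
  case True then show ?thesis by simp
next
  case False
  have "(\<Sum>i\<in>{1..r}. real i powr g) \<le> (\<Sum>i\<in>{1..r}. real r powr g)"
    using g by (intro sum_mono powr_mono2) auto
  also have "\<dots> = real r * real r powr g" by simp
  also have "\<dots> = real r powr (g + 1)" using False by (simp add: powr_add)
  finally show ?thesis .
qed

context
  fixes f :: "real \<Rightarrow> real \<Rightarrow> real" and g1 g2 :: real
  assumes f_hom: "\<And>a b s t. a > 0 \<Longrightarrow> b > 0 \<Longrightarrow> s > 0 \<Longrightarrow> t > 0 \<Longrightarrow>
                  f (a * s) (b * t) = a powr g1 * b powr g2 * f s t"
    and g1: "g1 \<ge> 0" and g2: "g2 \<ge> 0" and c: "f 1 1 \<ge> 0"
begin

lemma pwL: "\<omega> \<in> space M \<Longrightarrow> (\<Sum>i\<in>{1..r}. (f 1 1 * real i powr (g1+g2)) * indicator (Fset v i) \<omega>)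
           \<le> f (real (t_first X N r v \<omega>)) (real (t_last X N r v \<omega>)) * indicator (A1 M X N r v) \<omega>"
  by (rule pw_lower[of f g1 g2]) (simp_all add: f_hom g1 g2 c)

lemma pwU: "\<omega> \<in> space M \<Longrightarrow> f (real (t_first X N r v \<omega>)) (real (t_last X N r v \<omega>)) * indicator (A1 M X N r v) \<omega>
           \<le> (\<Sum>i\<in>{1..r}. (f 1 1 * real (i + l) powr (g1+g2)) * indicator (Fset v i) \<omega>)
             + f 1 1 * real r powr (g1+g2) * (\<Sum>i\<in>{1..r}. \<Sum>d\<in>{l..r}. indicator (Jset v i d) \<omega>)"
  by (rule pw_upper[of f g1 g2]) (simp_all add: f_hom g1 g2 c)

lemma Ig_int:
  "integrable M (\<lambda>\<omega>. f (real (t_first X N r v \<omega>)) (real (t_last X N r v \<omega>)) * indicator (A1 M X N r v) \<omega>)"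
proof (rule int_bd[OF Ig_meas])
  define B where "B = (\<Sum>i\<in>{1..r}. f 1 1 * real (i + 0) powr (g1+g2)) + f 1 1 * real r powr (g1+g2) * (\<Sum>i\<in>{1..r}. \<Sum>d\<in>{0..r}. 1)"
  fix \<omega> assume \<omega>: "\<omega> \<in> space M"
  have lo: "0 \<le> (\<Sum>i\<in>{1..r}. (f 1 1 * real i powr (g1+g2)) * indicator (Fset v i) \<omega>)"
    using c by (intro sum_nonneg) auto
  note L = pwL[OF \<omega>, where r=r and v=v]
  note U = pwU[OF \<omega>, where r=r and v=v and l=0]
  have "(\<Sum>i\<in>{1..r}. (f 1 1 * real (i + 0) powr (g1+g2)) * indicator (Fset v i) \<omega>) \<le> (\<Sum>i\<in>{1..r}. f 1 1 * real (i + 0) powr (g1+g2))"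
    using c by (intro sum_mono) (auto simp: indicator_def)
  moreover have "(\<Sum>i\<in>{1..r}. \<Sum>d\<in>{0..r}. indicator (Jset v i d) \<omega>) \<le> (\<Sum>i\<in>{1..r}. \<Sum>d\<in>{0..r}. (1::real))"
    by (intro sum_mono) (auto simp: indicator_def)
  ultimately have "f (real (t_first X N r v \<omega>)) (real (t_last X N r v \<omega>)) * indicator (A1 M X N r v) \<omega> \<le> B"
    using U c unfolding B_def by (smt (verit, best) mult_left_mono powr_ge_zero mult_nonneg_nonneg)
  thus "\<bar>f (real (t_first X N r v \<omega>)) (real (t_last X N r v \<omega>)) * indicator (A1 M X N r v) \<omega>\<bar> \<le> B"
    using L lo by linarith
qed

lemma block_lower:
  assumes l: "l \<ge> 1"
  shows "f 1 1 * (\<Sum>i\<in>{1..r}. real i powr (g1+g2)) * measure M (Wset l v)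
           - f 1 1 * real r powr (g1+g2+1) * (\<Sum>d\<in>{l..r}. qd v d)
         \<le> (\<integral>\<omega>. f (real (t_first X N r v \<omega>)) (real (t_last X N r v \<omega>)) * indicator (A1 M X N r v) \<omega> \<partial>M)"
proof -
  let ?S = "\<Sum>d\<in>{l..r}. qd v d"
  have Snn: "?S \<ge> 0" unfolding qd_def by (intro sum_nonneg) simp
  have "(\<integral>\<omega>. (\<Sum>i\<in>{1..r}. (f 1 1 * real i powr (g1+g2)) * indicator (Fset v i) \<omega>) \<partial>M)
      \<le> (\<integral>\<omega>. f (real (t_first X N r v \<omega>)) (real (t_last X N r v \<omega>)) * indicator (A1 M X N r v) \<omega> \<partial>M)"
  proof (rule integral_mono[OF _ Ig_int])
    show "integrable M (\<lambda>\<omega>. \<Sum>i\<in>{1..r}. (f 1 1 * real i powr (g1+g2)) * indicator (Fset v i) \<omega>)"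
      by (intro Bochner_Integration.integrable_sum integrable_mult_right intiM) simp
    fix \<omega> assume "\<omega> \<in> space M" thus "(\<Sum>i\<in>{1..r}. (f 1 1 * real i powr (g1+g2)) * indicator (Fset v i) \<omega>)
      \<le> f (real (t_first X N r v \<omega>)) (real (t_last X N r v \<omega>)) * indicator (A1 M X N r v) \<omega>"
      by (rule pwL)
  qed
  moreover have "(\<integral>\<omega>. (\<Sum>i\<in>{1..r}. (f 1 1 * real i powr (g1+g2)) * indicator (Fset v i) \<omega>) \<partial>M)
      = (\<Sum>i\<in>{1..r}. (f 1 1 * real i powr (g1+g2)) * measure M (Fset v i))"
    by (rule int_sum_ind) simp
  moreover have "(\<Sum>i\<in>{1..r}. (f 1 1 * real i powr (g1+g2)) * (measure M (Wset l v) - ?S))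
      \<le> (\<Sum>i\<in>{1..r}. (f 1 1 * real i powr (g1+g2)) * measure M (Fset v i))"
    using F_lower[OF _ l] c by (intro sum_mono mult_left_mono) auto
  moreover have "(\<Sum>i\<in>{1..r}. (f 1 1 * real i powr (g1+g2)) * (measure M (Wset l v) - ?S))
      = f 1 1 * (\<Sum>i\<in>{1..r}. real i powr (g1+g2)) * measure M (Wset l v)
        - f 1 1 * (\<Sum>i\<in>{1..r}. real i powr (g1+g2)) * ?S"
    by (simp add: sum_distrib_left sum_distrib_right algebra_simps sum_subtractf)
  moreover have "f 1 1 * (\<Sum>i\<in>{1..r}. real i powr (g1+g2)) * ?S \<le> f 1 1 * real r powr (g1+g2+1) * ?S"
    using sum_powr_le_r[of "g1+g2" r] g1 g2 c Snn by (intro mult_right_mono mult_left_mono) auto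
  ultimately show ?thesis by linarith
qed

lemma block_upper:
  shows "(\<integral>\<omega>. f (real (t_first X N r v \<omega>)) (real (t_last X N r v \<omega>)) * indicator (A1 M X N r v) \<omega> \<partial>M)
     \<le> f 1 1 * (\<Sum>i\<in>{1..r}. real (i + l) powr (g1+g2)) * measure M (Wset l v)
        + f 1 1 * real l * real (2 * l) powr (g1+g2) * Dv v
        + f 1 1 * real r powr (g1+g2+1) * (\<Sum>d\<in>{l..r}. qd v d)"
proof -
  let ?S = "\<Sum>d\<in>{l..r}. qd v d"
  let ?a = "\<lambda>i. f 1 1 * real (i + l) powr (g1+g2)"
  let ?K = "f 1 1 * real r powr (g1+g2)"
  have intJ: "integrable M (\<lambda>\<omega>. \<Sum>d\<in>{l..r}. indicator (Jset v i d) \<omega> :: real)" for i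
    by (intro Bochner_Integration.integrable_sum intiM) simp
  have i1: "integrable M (\<lambda>\<omega>. \<Sum>i\<in>{1..r}. ?a i * indicator (Fset v i) \<omega>)"
    by (intro Bochner_Integration.integrable_sum integrable_mult_right intiM) simp
  have i2: "integrable M (\<lambda>\<omega>. ?K * (\<Sum>i\<in>{1..r}. \<Sum>d\<in>{l..r}. indicator (Jset v i d) \<omega>))"
    by (intro integrable_mult_right Bochner_Integration.integrable_sum intiM) simp
  have "(\<integral>\<omega>. f (real (t_first X N r v \<omega>)) (real (t_last X N r v \<omega>)) * indicator (A1 M X N r v) \<omega> \<partial>M)
      \<le> (\<integral>\<omega>. (\<Sum>i\<in>{1..r}. ?a i * indicator (Fset v i) \<omega>) + ?K * (\<Sum>i\<in>{1..r}. \<Sum>d\<in>{l..r}. indicator (Jset v i d) \<omega>) \<partial>M)"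
  proof (rule integral_mono[OF Ig_int])
    show "integrable M (\<lambda>\<omega>. (\<Sum>i\<in>{1..r}. ?a i * indicator (Fset v i) \<omega>) + ?K * (\<Sum>i\<in>{1..r}. \<Sum>d\<in>{l..r}. indicator (Jset v i d) \<omega>))"
      using i1 i2 by (rule Bochner_Integration.integrable_add)
    fix \<omega> assume "\<omega> \<in> space M"
    thus "f (real (t_first X N r v \<omega>)) (real (t_last X N r v \<omega>)) * indicator (A1 M X N r v) \<omega>
       \<le> (\<Sum>i\<in>{1..r}. ?a i * indicator (Fset v i) \<omega>) + ?K * (\<Sum>i\<in>{1..r}. \<Sum>d\<in>{l..r}. indicator (Jset v i d) \<omega>)"
      by (rule pwU)
  qed
  also have "\<dots> = (\<Sum>i\<in>{1..r}. ?a i * measure M (Fset v i)) + ?K * (\<Sum>i\<in>{1..r}. \<Sum>d\<in>{l..r}. measure M (Jset v i d))"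
  proof -
    have e1: "(\<integral>\<omega>. (\<Sum>i\<in>{1..r}. ?a i * indicator (Fset v i) \<omega>) \<partial>M) = (\<Sum>i\<in>{1..r}. ?a i * measure M (Fset v i))"
      by (rule int_sum_ind) simp
    have e2: "(\<integral>\<omega>. ?K * (\<Sum>i\<in>{1..r}. \<Sum>d\<in>{l..r}. indicator (Jset v i d) \<omega>) \<partial>M)
        = ?K * (\<Sum>i\<in>{1..r}. \<Sum>d\<in>{l..r}. measure M (Jset v i d))"
    proof -
      have "(\<integral>\<omega>. (\<Sum>i\<in>{1..r}. \<Sum>d\<in>{l..r}. indicator (Jset v i d) \<omega> :: real) \<partial>M)
          = (\<Sum>i\<in>{1..r}. (\<integral>\<omega>. (\<Sum>d\<in>{l..r}. indicator (Jset v i d) \<omega> :: real) \<partial>M))"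
        using intJ by (intro Bochner_Integration.integral_sum) auto
      also have "\<dots> = (\<Sum>i\<in>{1..r}. \<Sum>d\<in>{l..r}. measure M (Jset v i d))"
        using int_sum_ind[where a="\<lambda>_. 1" and I="{l..r}"] by simp
      finally show ?thesis by simp
    qed
    show ?thesis using i1 i2 e1 e2 by simp
  qed
  also have "(\<Sum>i\<in>{1..r}. \<Sum>d\<in>{l..r}. measure M (Jset v i d)) = real r * ?S"
    unfolding Jset_def qd_def by (simp add: J_prob)
  also have "?K * (real r * ?S) = f 1 1 * real r powr (g1+g2+1) * ?S"
  proof (cases "r = 0")
    case True then show ?thesis by simp
  next
    case False then show ?thesis by (simp add: powr_add)
  qed
  also have "(\<Sum>i\<in>{1..r}. ?a i * measure M (Fset v i))
      \<le> (\<Sum>i\<in>{1..r}. ?a i * (measure M (Wset l v) + (if i \<le> l then Dv v else 0)))"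
    using c by (intro sum_mono mult_left_mono F_upper) auto
  also have "\<dots> = (\<Sum>i\<in>{1..r}. ?a i * measure M (Wset l v) + (if i \<le> l then ?a i * Dv v else 0))"
    by (intro sum.cong refl) (simp add: distrib_left)
  also have "\<dots> = (\<Sum>i\<in>{1..r}. ?a i) * measure M (Wset l v) + (\<Sum>i\<in>{1..r}. if i \<le> l then ?a i * Dv v else 0)"
    by (simp only: sum.distrib sum_distrib_right)
  also have "(\<Sum>i\<in>{1..r}. if i \<le> l then ?a i * Dv v else 0) \<le> f 1 1 * real l * real (2 * l) powr (g1+g2) * Dv v"
  proof -
    have D: "Dv v \<ge> 0" unfolding Dv_def by simp
    have "(\<Sum>i\<in>{1..r}. if i \<le> l then ?a i * Dv v else 0) \<le> (\<Sum>i\<in>{1..r}. if i \<le> l then f 1 1 * real (2 * l) powr (g1+g2) * Dv v else 0)"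
      using c D g1 g2 by (intro sum_mono) (auto intro!: mult_right_mono mult_left_mono powr_mono2)
    also have "\<dots> = (\<Sum>i\<in>{1..r} \<inter> {i. i \<le> l}. f 1 1 * real (2 * l) powr (g1+g2) * Dv v)"
      by (simp add: sum.If_cases)
    also have "\<dots> = real (card ({1..r} \<inter> {i. i \<le> l})) * (f 1 1 * real (2 * l) powr (g1+g2) * Dv v)" by simp
    also have "\<dots> \<le> real l * (f 1 1 * real (2 * l) powr (g1+g2) * Dv v)"
    proof (intro mult_right_mono)
      have "card ({1..r} \<inter> {i. i \<le> l}) \<le> card {1..l}" by (intro card_mono) auto
      thus "real (card ({1..r} \<inter> {i. i \<le> l})) \<le> real l" by simp
      show "0 \<le> f 1 1 * real (2 * l) powr (g1+g2) * Dv v" using c D by simp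
    qed
    finally show ?thesis by (simp add: ac_simps)
  qed
  finally show ?thesis by (simp add: mult.assoc sum_distrib_left)
qed

end
end



lemma final_arith:
  fixes c g th p s A B T d :: real
  assumes c: "c \<ge> 0" and g: "g \<ge> 0" and th: "0 \<le> th" "th \<le> 1" and d: "0 < d" "d \<le> 1/2"
    and p: "0 \<le> p" "th - d \<le> p" "p \<le> th + 2 * d" and s: "0 \<le> s" "s \<le> d"
    and B: "B \<le> d" and A: "A \<le> 1 + d"
    and lo: "c * p / (g + 1) - c * s \<le> T" and up: "T \<le> c * p * A / (g + 1) + B + c * s"
  shows "\<bar>T - c / (g + 1) * th\<bar> \<le> (6 * c + 1) * d"
proof -
  define k where "k = 1 / (g + 1)"
  have k: "0 < k" "k \<le> 1" using g unfolding k_def by (auto simp: field_simps)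
  have lo': "c * k * p - c * s \<le> T" using lo unfolding k_def by simp
  have up': "T \<le> c * k * (p * A) + B + c * s" using up unfolding k_def by (simp add: ac_simps)
  have ck: "0 \<le> c * k" "c * k \<le> c" using c k by (auto simp: mult_left_le)
  have f1: "c * k * p \<ge> c * k * (th - d)" using p ck by (intro mult_left_mono) auto
  have f2: "c * k * (th - d) = c * k * th - c * k * d" by (simp add: algebra_simps)
  have f3: "c * k * d \<le> c * d" using ck d by (intro mult_right_mono) auto
  have f4: "c * s \<le> c * d" using c s by (intro mult_left_mono) auto
  have L: "T \<ge> c * k * th - 2 * c * d" using lo' f1 f2 f3 f4 by linarith
  have g1: "p * A \<le> p * (1 + d)" using p A by (intro mult_left_mono) auto
  have g2: "p * (1 + d) \<le> (th + 2 * d) * (1 + d)" using p d by (intro mult_right_mono) auto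
  have g3: "(th + 2 * d) * (1 + d) = th + th * d + 2 * d + 2 * (d * d)" by (simp add: algebra_simps)
  have g4: "d * d \<le> d * (1/2)" using d by (intro mult_left_mono) auto
  have g5: "th * d \<le> 1 * d" using th d by (intro mult_right_mono) auto
  have pA: "p * A \<le> th + 4 * d" using g1 g2 g3 g4 g5 by linarith
  have h1: "c * k * (p * A) \<le> c * k * (th + 4 * d)" using pA ck by (intro mult_left_mono) auto
  have h2: "c * k * (th + 4 * d) = c * k * th + 4 * (c * k * d)" by (simp add: algebra_simps)
  have U: "T \<le> c * k * th + 5 * (c * d) + d" using up' h1 h2 f3 f4 B by linarith
  have e: "c / (g + 1) * th = c * k * th" unfolding k_def by simp
  have cd: "0 \<le> c * d" using c d by simp
  have "(6 * c + 1) * d = 6 * (c * d) + d" by (simp add: algebra_simps)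
  thus ?thesis using L U e cd d by linarith
qed

context tset begin

lemma thl_lim: "(thl \<longlonglongrightarrow> theta MY Y N)" and thl_ge: "thl l \<ge> theta MY Y N"
proof -
  define A where "A = (\<lambda>l::nat. {y\<in>space MY. \<forall>k\<in>{- int l..<0}. N (Y k y) \<le> 1})"
  have As: "range A \<subseteq> sets MY"
  proof
    fix B assume "B \<in> range A"
    then obtain l where "B = A l" by blast
    moreover have "A l \<in> sets MY" unfolding A_def by measurable
    ultimately show "B \<in> sets MY" by simp
  qed
  have dec: "decseq A" unfolding A_def decseq_def by auto
  have I: "(\<Inter>l. A l) = {v\<in>space MY. \<forall>k<0. N (Y k v) \<le> 1}"
  proof (intro set_eqI iffI)
    fix y assume y: "y \<in> (\<Inter>l. A l)"
    have "N (Y k y) \<le> 1" if k: "k < 0" for k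
    proof -
      have "y \<in> A (nat (- k))" using y by blast
      moreover have "k \<in> {- int (nat (- k))..<0}" using k by simp
      ultimately show ?thesis unfolding A_def by blast
    qed
    thus "y \<in> {v\<in>space MY. \<forall>k<0. N (Y k v) \<le> 1}" using y unfolding A_def by auto
  qed (auto simp: A_def)
  have "(\<lambda>l. measure MY (A l)) \<longlonglongrightarrow> measure MY (\<Inter>l. A l)"
    by (rule PY.finite_Lim_measure_decseq[OF As dec])
  thus "(thl \<longlonglongrightarrow> theta MY Y N)" unfolding thl_def theta_def I[symmetric] A_def by simp
  have "{v\<in>space MY. \<forall>k<0. N (Y k v) \<le> 1} \<subseteq> A l" unfolding A_def by auto
  thus "thl l \<ge> theta MY Y N" unfolding thl_def theta_def A_def
    by (intro PY.finite_measure_mono) (auto simp: A_def)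
qed

end



lemma per_n_arith:
  fixes c Sa Sb R Dv Wm Sm E g K A :: real
  assumes R: "R > 0" and Dv: "Dv > 0" and c: "c \<ge> 0" and Wm: "Wm \<ge> 0" and g: "g \<ge> 0"
    and lo: "c * Sa * Wm - c * R * Sm \<le> E" and up: "E \<le> c * Sb * Wm + K * Dv + c * R * Sm"
    and Sa: "R / (g + 1) \<le> Sa" and Sb: "Sb \<le> A * R / (g + 1)"
  shows "c * (Wm / Dv) / (g + 1) - c * (Sm / Dv) \<le> E / (R * Dv)"
    and "E / (R * Dv) \<le> c * (Wm / Dv) * A / (g + 1) + K / R + c * (Sm / Dv)"
proof -
  have g1: "g + 1 > 0" using g by simp
  have e1: "(c * Sa * Wm - c * R * Sm) / (R * Dv) = c * (Sa / R) * (Wm / Dv) - c * (Sm / Dv)"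
    using R Dv by (simp add: field_simps)
  have "1 / (g + 1) \<le> Sa / R" using Sa R g1 by (simp add: field_simps)
  hence e2: "c * (1 / (g + 1)) * (Wm / Dv) \<le> c * (Sa / R) * (Wm / Dv)"
    using c Wm Dv by (intro mult_right_mono mult_left_mono) auto
  have "(c * Sa * Wm - c * R * Sm) / (R * Dv) \<le> E / (R * Dv)"
    using lo R Dv by (intro divide_right_mono) auto
  moreover have e0: "c * (Wm / Dv) / (g + 1) = c * (1 / (g + 1)) * (Wm / Dv)" by simp
  ultimately show "c * (Wm / Dv) / (g + 1) - c * (Sm / Dv) \<le> E / (R * Dv)" using e1 e2 by linarith
  have e3: "(c * Sb * Wm + K * Dv + c * R * Sm) / (R * Dv) = c * (Sb / R) * (Wm / Dv) + K / R + c * (Sm / Dv)"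
    using R Dv by (simp add: field_simps)
  have "Sb / R \<le> A / (g + 1)" using Sb R g1 by (simp add: field_simps)
  hence e4: "c * (Sb / R) * (Wm / Dv) \<le> c * (A / (g + 1)) * (Wm / Dv)"
    using c Wm Dv by (intro mult_right_mono mult_left_mono) auto
  have "E / (R * Dv) \<le> (c * Sb * Wm + K * Dv + c * R * Sm) / (R * Dv)"
    using up R Dv by (intro divide_right_mono) auto
  moreover have e5: "c * (Wm / Dv) * A / (g + 1) = c * (A / (g + 1)) * (Wm / Dv)" by (simp add: ac_simps)
  ultimately show "E / (R * Dv) \<le> c * (Wm / Dv) * A / (g + 1) + K / R + c * (Sm / Dv)" using e3 e4 by linarith
qed

lemma sum_shift_le:
  fixes g :: real assumes g: "g \<ge> 0"
  shows "(\<Sum>i\<in>{1..r}. real (i + l) powr g) \<le> real (r + l + 1) powr (g + 1) / (g + 1)"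
proof -
  have "(\<Sum>i\<in>{1..r}. real (i + l) powr g) = (\<Sum>j\<in>{1+l..r+l}. real j powr g)"
    using sum.shift_bounds_cl_nat_ivl[of "\<lambda>j. real j powr g" 1 l r] by simp
  also have "\<dots> \<le> (\<Sum>j\<in>{1..r+l}. real j powr g)" by (intro sum_mono2) auto
  also have "\<dots> \<le> real (r + l + 1) powr (g + 1) / (g + 1)" by (rule sum_powr_upper[OF g])
  finally show ?thesis .
qed

context tset begin

lemma main_lim:
  fixes f :: "real \<Rightarrow> real \<Rightarrow> real" and g1 g2 :: real and u :: "nat \<Rightarrow> real" and r :: "nat \<Rightarrow> nat"
  assumes f_hom: "\<And>a b s t. a > 0 \<Longrightarrow> b > 0 \<Longrightarrow> s > 0 \<Longrightarrow> t > 0 \<Longrightarrow>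
                  f (a * s) (b * t) = a powr g1 * b powr g2 * f s t"
    and g1: "g1 \<ge> 0" and g2: "g2 \<ge> 0" and c: "f 1 1 \<ge> 0"
    and u_pos: "\<And>n. u n > 0" and r_pos: "\<And>n. r n > 0"
    and u_lim: "filterlim u at_top sequentially"
    and r_lim: "filterlim r at_top sequentially"
    and S0: "cond_S 0 M X N r u"
  shows "(\<lambda>n. (\<integral>\<omega>. f (real (t_first X N (r n) (u n) \<omega>)) (real (t_last X N (r n) (u n) \<omega>))
                     * indicator (A1 M X N (r n) (u n)) \<omega> \<partial>M)
              / (real (r n) powr (g1 + g2 + 1) * wn M X N u n))
         \<longlonglongrightarrow> f 1 1 / (g1 + g2 + 1) * theta MY Y N"
proof (rule tendstoI)
  fix e :: real assume e: "e > 0"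
  define c where "c = f 1 1"
  define g where "g = g1 + g2"
  have g: "g \<ge> 0" using g1 g2 unfolding g_def by simp
  have cc: "c \<ge> 0" using c unfolding c_def .
  define d where "d = min (1/2) (e / (2 * (6 * c + 1)))"
  have d: "d > 0" using e cc unfolding d_def by auto
  have d2: "d \<le> 1/2" unfolding d_def by (rule min.cobounded1)
  note d = d d2
  have de: "(6 * c + 1) * d < e"
  proof -
    have "d \<le> e / (2 * (6 * c + 1))" unfolding d_def by simp
    hence "(6 * c + 1) * d \<le> (6 * c + 1) * (e / (2 * (6 * c + 1)))" using cc by (intro mult_left_mono) auto
    also have "\<dots> = e / 2" using cc by (simp add: field_simps)
    finally show ?thesis using e by simp
  qed
  define th where "th = theta MY Y N"
  have th: "0 \<le> th" "th \<le> 1" unfolding th_def theta_def by simp_all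
  define sig' where "sig' = (\<lambda>l n. 1 / wn M X N u n *
         (\<Sum>i=l..r n. real i powr 0 *
            measure M {\<omega>\<in>space M. N (X 0 \<omega>) > u n * 1 \<and> N (X (int i) \<omega>) > u n * 1}))"
  have S: "((\<lambda>l. limsup (\<lambda>n. ereal (sig' l n))) \<longlongrightarrow> 0) sequentially"
    using S0[unfolded cond_S_def, rule_format, of 1 1] unfolding sig'_def by simp
  have ev1: "\<forall>\<^sub>F l in sequentially. limsup (\<lambda>n. ereal (sig' l n)) < ereal d"
    using order_tendstoD(2)[OF S, of "ereal d"] d by simp
  have ev2: "\<forall>\<^sub>F l in sequentially. thl l < th + d"
    using order_tendstoD(2)[OF thl_lim, of "th + d"] d unfolding th_def by simp
  obtain l0 where l0: "\<And>l. l \<ge> l0 \<Longrightarrow> limsup (\<lambda>n. ereal (sig' l n)) < ereal d \<and> thl l < th + d"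
    using eventually_conj[OF ev1 ev2] unfolding eventually_sequentially by blast
  define l where "l = l0 + 1"
  have l1: "l \<ge> 1" unfolding l_def by simp
  have lS: "limsup (\<lambda>n. ereal (sig' l n)) < ereal d" and lth: "thl l < th + d"
    using l0[of l] unfolding l_def by auto
  have thl_ge': "th \<le> thl l" unfolding th_def by (rule thl_ge)
  define sig where "sig = (\<lambda>n. (\<Sum>dd\<in>{l..r n}. qd (u n) dd) / Dv (u n))"
  have wnD: "wn M X N u n = Dv (u n)" for n unfolding wn_def Dv_def by simp
  have sig_eq: "sig' l n = sig n" for n
  proof -
    have "(\<Sum>i=l..r n. real i powr 0 *
            measure M {\<omega>\<in>space M. N (X 0 \<omega>) > u n * 1 \<and> N (X (int i) \<omega>) > u n * 1}) = (\<Sum>dd\<in>{l..r n}. qd (u n) dd)"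
      using l1 by (intro sum.cong refl) (auto simp: qd_def)
    thus ?thesis unfolding sig'_def sig_def wnD by simp
  qed
  have evS: "\<forall>\<^sub>F n in sequentially. sig n < d"
  proof -
    have "limsup (\<lambda>n. ereal (sig n)) < ereal d" using lS sig_eq by simp
    from Limsup_lessD[OF this] show ?thesis by simp
  qed
  have ru: "filterlim (\<lambda>n. real (r n)) at_top sequentially"
    using filterlim_compose[OF filterlim_real_sequentially r_lim] by (simp add: o_def)
  define Wn where "Wn = (\<lambda>n. measure M (Wset l (u n)))"
  have evW: "\<forall>\<^sub>F n in sequentially. \<bar>Wn n / Dv (u n) - thl l\<bar> < d"
    using filterlim_iff[THEN iffD1, OF u_lim, rule_format, OF win_lim[OF l1 d(1)]] unfolding Wn_def by simp
  have evD: "\<forall>\<^sub>F n in sequentially. Dv (u n) > 0"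
    using filterlim_iff[THEN iffD1, OF u_lim, rule_format, OF tpos] unfolding Dv_def by simp
  define A where "A = (\<lambda>n. real (r n + l + 1) powr (g + 1) / real (r n) powr (g + 1))"
  have Alim: "A \<longlonglongrightarrow> 1"
  proof -
    have A_eq: "A n = (1 + real (l + 1) / real (r n)) powr (g + 1)" for n
    proof -
      have "real (r n + l + 1) / real (r n) = 1 + real (l + 1) / real (r n)"
        using r_pos[of n] by (simp add: field_simps)
      thus ?thesis unfolding A_def by (simp add: powr_divide[symmetric])
    qed
    have "(\<lambda>n. real (l + 1) / real (r n)) \<longlonglongrightarrow> 0"
      by (intro tendsto_divide_0[OF tendsto_const] filterlim_at_top_imp_at_infinity ru)
    hence "(\<lambda>n. 1 + real (l + 1) / real (r n)) \<longlonglongrightarrow> 1 + 0" by (intro tendsto_add tendsto_const)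
    hence "(\<lambda>n. (1 + real (l + 1) / real (r n)) powr (g + 1)) \<longlonglongrightarrow> (1 + 0) powr (g + 1)"
      by (intro tendsto_powr tendsto_const) auto
    thus ?thesis unfolding A_eq by simp
  qed
  have evA: "\<forall>\<^sub>F n in sequentially. A n < 1 + d" using order_tendstoD(2)[OF Alim, of "1 + d"] d by simp
  define K where "K = c * real l * real (2 * l) powr g"
  have Blim: "(\<lambda>n. K / real (r n) powr (g + 1)) \<longlonglongrightarrow> 0"
  proof -
    have "(\<lambda>n. real (r n) powr - (g + 1)) \<longlonglongrightarrow> 0" using g by (intro tendsto_neg_powr ru) auto
    hence "(\<lambda>n. K * real (r n) powr - (g + 1)) \<longlonglongrightarrow> K * 0" by (intro tendsto_mult tendsto_const)
    thus ?thesis by (simp only: powr_minus divide_inverse mult_zero_right)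
  qed
  have evB: "\<forall>\<^sub>F n in sequentially. K / real (r n) powr (g + 1) < d" using order_tendstoD(2)[OF Blim, of d] d by simp
  show "\<forall>\<^sub>F n in sequentially. dist ((\<integral>\<omega>. f (real (t_first X N (r n) (u n) \<omega>)) (real (t_last X N (r n) (u n) \<omega>))
                     * indicator (A1 M X N (r n) (u n)) \<omega> \<partial>M)
              / (real (r n) powr (g1 + g2 + 1) * wn M X N u n)) (f 1 1 / (g1 + g2 + 1) * theta MY Y N) < e"
    using evS evW evD evA evB
  proof eventually_elim
    case (elim n)
    define E where "E = (\<integral>\<omega>. f (real (t_first X N (r n) (u n) \<omega>)) (real (t_last X N (r n) (u n) \<omega>))
                     * indicator (A1 M X N (r n) (u n)) \<omega> \<partial>M)"
    define R where "R = real (r n) powr (g + 1)"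
    define Sm where "Sm = (\<Sum>dd\<in>{l..r n}. qd (u n) dd)"
    have R: "R > 0" unfolding R_def using r_pos[of n] by simp
    have Dp: "Dv (u n) > 0" using elim by simp
    have Wm: "Wn n \<ge> 0" unfolding Wn_def by simp
    have Smn: "Sm \<ge> 0" unfolding Sm_def qd_def by (intro sum_nonneg) simp
    have BL: "f 1 1 * (\<Sum>i\<in>{1..r n}. real i powr (g1+g2)) * measure M (Wset l (u n))
           - f 1 1 * real (r n) powr (g1+g2+1) * (\<Sum>d\<in>{l..r n}. qd (u n) d) \<le> E"
      unfolding E_def by (rule block_lower[of f g1 g2]) (use l1 in \<open>simp_all add: f_hom g1 g2 c l_def\<close>)
    have BU: "E \<le> f 1 1 * (\<Sum>i\<in>{1..r n}. real (i + l) powr (g1+g2)) * measure M (Wset l (u n))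
        + f 1 1 * real l * real (2 * l) powr (g1+g2) * Dv (u n)
        + f 1 1 * real (r n) powr (g1+g2+1) * (\<Sum>d\<in>{l..r n}. qd (u n) d)"
      unfolding E_def by (rule block_upper[of f g1 g2]) (simp_all add: f_hom g1 g2 c)
    have S1: "R / (g + 1) \<le> (\<Sum>i\<in>{1..r n}. real i powr g)" unfolding R_def by (rule sum_powr_lower[OF g])
    have S2: "(\<Sum>i\<in>{1..r n}. real (i + l) powr g) \<le> A n * R / (g + 1)"
      unfolding A_def R_def using sum_shift_le[OF g, where r="r n" and l=l] R_def R by simp
    note PN = per_n_arith[OF R Dp cc Wm g, where E=E and Sm=Sm and Sa="\<Sum>i\<in>{1..r n}. real i powr g"
        and Sb="\<Sum>i\<in>{1..r n}. real (i + l) powr g" and K=K and A="A n"]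
    have BL': "c * (\<Sum>i\<in>{1..r n}. real i powr g) * Wn n - c * R * Sm \<le> E"
      unfolding c_def g_def R_def Sm_def Wn_def by (rule BL)
    have BU': "E \<le> c * (\<Sum>i\<in>{1..r n}. real (i + l) powr g) * Wn n + K * Dv (u n) + c * R * Sm"
      unfolding c_def g_def R_def Sm_def Wn_def K_def by (rule BU)
    have lo: "c * (Wn n / Dv (u n)) / (g + 1) - c * (Sm / Dv (u n)) \<le> E / (R * Dv (u n))"
      by (rule PN(1)[OF BL' BU' S1 S2])
    have up: "E / (R * Dv (u n)) \<le> c * (Wn n / Dv (u n)) * A n / (g + 1) + K / R + c * (Sm / Dv (u n))"
      by (rule PN(2)[OF BL' BU' S1 S2])
    have sg: "Sm / Dv (u n) = sig n" unfolding sig_def Sm_def by simp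
    have pn: "0 \<le> Wn n / Dv (u n)" using Wm Dp by simp
    have fa: "\<bar>E / (R * Dv (u n)) - c / (g + 1) * th\<bar> \<le> (6 * c + 1) * d"
    proof (rule final_arith[OF cc g th d pn])
      show "th - d \<le> Wn n / Dv (u n)" using elim thl_ge' by linarith
      show "Wn n / Dv (u n) \<le> th + 2 * d" using elim lth by linarith
      show "0 \<le> Sm / Dv (u n)" using Smn Dp by simp
      show "Sm / Dv (u n) \<le> d" using elim sg by simp
      show "K / R \<le> d" using elim unfolding R_def by simp
      show "A n \<le> 1 + d" using elim by simp
      show "c * (Wn n / Dv (u n)) / (g + 1) - c * (Sm / Dv (u n)) \<le> E / (R * Dv (u n))" by (rule lo)
      show "E / (R * Dv (u n)) \<le> c * (Wn n / Dv (u n)) * A n / (g + 1) + K / R + c * (Sm / Dv (u n))" by (rule up)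
    qed
    have eqD: "real (r n) powr (g1 + g2 + 1) * wn M X N u n = R * Dv (u n)"
      unfolding R_def g_def wnD by simp
    have eqL: "f 1 1 / (g1 + g2 + 1) * theta MY Y N = c / (g + 1) * th" unfolding c_def g_def th_def by simp
    have "dist (E / (real (r n) powr (g1 + g2 + 1) * wn M X N u n)) (f 1 1 / (g1 + g2 + 1) * theta MY Y N) < e"
      unfolding dist_real_def eqD eqL using fa de by linarith
    thus ?case unfolding E_def .
  qed
qed

end

theorem lemma3p4:
  fixes M :: "'w measure" and X :: "int \<Rightarrow> 'w \<Rightarrow> real ^ 'd"
    and MY :: "'v measure" and Y :: "int \<Rightarrow> 'v \<Rightarrow> real ^ 'd"
    and N :: "real ^ 'd \<Rightarrow> real"
    and u :: "nat \<Rightarrow> real" and r :: "nat \<Rightarrow> nat"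
    and \<gamma>1 \<gamma>2 :: real and f :: "real \<Rightarrow> real \<Rightarrow> real"
  assumes norm: "is_norm N"
    and probM: "prob_space M" and probMY: "prob_space MY"
    and measX: "\<And>k. X k \<in> borel_measurable M"
    and measY: "\<And>k. Y k \<in> borel_measurable MY"
    and stat: "strictly_stationary M X"
    and rv: "rv_marginal M X N"
    and tail: "tail_process M X N MY Y"
    and u_pos: "\<And>n. u n > 0" and r_pos: "\<And>n. r n > 0"
    and u_lim: "filterlim u at_top sequentially"
    and r_lim: "filterlim r at_top sequentially"
    and nw_lim: "filterlim (\<lambda>n. real n * wn M X N u n) at_top sequentially"
    and rn_lim: "(\<lambda>n. real (r n) / real n) \<longlonglongrightarrow> 0"
    and rw_lim: "(\<lambda>n. real (r n) * wn M X N u n) \<longlonglongrightarrow> 0"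
    and S0: "cond_S 0 M X N r u"
    and g1: "\<gamma>1 \<ge> 0" and g2: "\<gamma>2 \<ge> 0"
    and f_nonneg: "\<And>s t. s \<ge> 0 \<Longrightarrow> t \<ge> 0 \<Longrightarrow> f s t \<ge> 0"
    and f_hom: "\<And>a b s t. a > 0 \<Longrightarrow> b > 0 \<Longrightarrow> s > 0 \<Longrightarrow> t > 0 \<Longrightarrow>
                  f (a * s) (b * t) = a powr \<gamma>1 * b powr \<gamma>2 * f s t"
  shows "(\<lambda>n. (\<integral>\<omega>. f (real (t_first X N (r n) (u n) \<omega>)) (real (t_last X N (r n) (u n) \<omega>))
                     * indicator (A1 M X N (r n) (u n)) \<omega> \<partial>M)
              / (real (r n) powr (\<gamma>1 + \<gamma>2 + 1) * wn M X N u n))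
         \<longlonglongrightarrow> f 1 1 / (\<gamma>1 + \<gamma>2 + 1) * theta MY Y N"
proof -
  from rv obtain \<alpha> where \<alpha>: "\<alpha> > 0"
    and tp: "\<forall>\<^sub>F x in at_top. measure M {\<omega>\<in>space M. N (X 0 \<omega>) > x} > 0"
    and rat: "\<forall>t>0. ((\<lambda>x. measure M {\<omega>\<in>space M. N (X 0 \<omega>) > t * x} /
                   measure M {\<omega>\<in>space M. N (X 0 \<omega>) > x}) \<longlongrightarrow> t powr (-\<alpha>)) at_top"
    using rv unfolding rv_marginal_def by (elim exE conjE) (rule that; assumption)
  interpret T: tset M X MY Y N \<alpha>
  proof (rule tset.intro)
    show "\<And>t. t > 0 \<Longrightarrow> ((\<lambda>x. measure M {\<omega>\<in>space M. N (X 0 \<omega>) > t * x} /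
                   measure M {\<omega>\<in>space M. N (X 0 \<omega>) > x}) \<longlongrightarrow> t powr (-\<alpha>)) at_top"
      using rat by blast
  qed (fact norm probM probMY measX measY \<alpha> tp tail stat)+
  have c: "f 1 1 \<ge> 0" using f_nonneg[of 1 1] by simp
  show ?thesis
    by (rule T.main_lim[of f \<gamma>1 \<gamma>2]) (use f_hom g1 g2 c u_pos r_pos u_lim r_lim S0 in \<open>simp_all\<close>)
qed

end
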